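(* Let $A\in\mathbb{C}^{p\times p}$ and $C\in\mathbb{C}^{q\times q}$ be Hermitian positive semidefinite, $B\in\mathbb{C}^{p\times q}$, and $H=\begin{bmatrix} A & B\\ B^* & -C\end{bmatrix}$. Decompose $\mathbb{C}^p=\mathcal{R}(A)\oplus\mathcal{N}(A)$ and $\mathbb{C}^q=\mathcal{R}(C)\oplus\mathcal{N}(C)$ (orthogonal decompositions into range and null-space). Let $A_1$ be the restriction of $A$ to $\mathcal{R}(A)$ and $C_1$ the restriction of $C$ to $\mathcal{R}(C)$ (these are positive definite), and write $B$ in block form with respect to these decompositions, \[ B=\begin{bmatrix} B_{11} & B_{12}\\ B_{21} & B_{22}\end{bmatrix}, \] where $B_{11}:\mathcal{R}(C)\to\mathcal{R}(A)$, $B_{12}:\mathcal{N}(C)\to\mathcal{R}(A)$, $B_{21}:\mathcal{R}(C)\to\mathcal{N}(A)$, $B_{22}:\mathcal{N}(C)\to\mathcal{N}(A)$ are the corresponding compressions of $B$. Assume that $\dim\mathcal{N}(A)=\dim\mathcal{N}(C)$ and that $B_{22}$ is nonsingular. Then $(-\epsilon,\epsilon)\cap\sigma(H)=\emptyset$, where \[ \epsilon=\frac{1}{\bigl(1+\max\{\|B_{12}B_{22}^{-1}\|,\ \|B_{21}^*B_{22}^{-*}\|\}\bigr)^2\ \max\{\|A_1^{-1}\|,\ \|C_1^{-1}\|,\ \|B_{22}^{-1}\|\}}. \]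
   Context: $\mathcal{R}$ and $\mathcal{N}$ denote range and null-space, $\sigma$ the spectrum, $\|\cdot\|$ the spectral norm, and $B_{22}^{-*}=(B_{22}^{-1})^*$. *)

theory Defs
  imports "Jordan_Normal_Form.Schur_Decomposition" "Jordan_Normal_Form.Char_Poly"
          "Jordan_Normal_Form.Matrix_Kernel"
begin

definition hermitian_mat :: "complex mat \<Rightarrow> bool" where
  "hermitian_mat M \<longleftrightarrow> square_mat M \<and> mat_adjoint M = M"

definition psd_mat :: "complex mat \<Rightarrow> bool" where
  "psd_mat M \<longleftrightarrow> hermitian_mat M \<and>
     (\<forall>x \<in> carrier_vec (dim_col M). (M *\<^sub>v x) \<bullet>c x \<ge> 0)"

definition mat_range :: "complex mat \<Rightarrow> complex vec set" where
  "mat_range M = {M *\<^sub>v x | x. x \<in> carrier_vec (dim_col M)}"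

definition vnorm :: "complex vec \<Rightarrow> real" where
  "vnorm v = sqrt (Re (v \<bullet>c v))"

definition orth_proj :: "complex vec set \<Rightarrow> complex vec \<Rightarrow> complex vec" where
  "orth_proj S v = (THE w. w \<in> S \<and> (\<forall>u\<in>S. (v - w) \<bullet>c u = 0))"

definition opnorm_on :: "complex vec set \<Rightarrow> (complex vec \<Rightarrow> complex vec) \<Rightarrow> real" where
  "opnorm_on S f = Sup {vnorm (f x) | x. x \<in> S \<and> vnorm x \<le> 1}"

definition sub_adjoint :: "complex vec set \<Rightarrow> complex vec set \<Rightarrow>
     (complex vec \<Rightarrow> complex vec) \<Rightarrow> complex vec \<Rightarrow> complex vec" where
  "sub_adjoint S T f y = (THE x. x \<in> S \<and> (\<forall>u\<in>S. f u \<bullet>c y = u \<bullet>c x))"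

definition compression :: "complex mat \<Rightarrow> complex vec set \<Rightarrow> complex vec \<Rightarrow> complex vec" where
  "compression M T x = orth_proj T (M *\<^sub>v x)"

definition spectrum_mat :: "complex mat \<Rightarrow> complex set" where
  "spectrum_mat M = {k. eigenvalue M k}"

end

theory Submission
  imports Defs
begin


lemma conj_minus_vec: "v \<in> carrier_vec n \<Longrightarrow> w \<in> carrier_vec n \<Longrightarrow>
   conjugate (v - (w::complex vec)) = conjugate v - conjugate w"
  by (intro eq_vecI) auto

lemma ip_add_left: "u \<in> carrier_vec n \<Longrightarrow> v \<in> carrier_vec n \<Longrightarrow> w \<in> carrier_vec n \<Longrightarrow>
  (u + v) \<bullet>c w = u \<bullet>c w + v \<bullet>c (w::complex vec)"
  by (rule add_scalar_prod_distrib[of _ n]) auto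

lemma ip_add_right: "u \<in> carrier_vec n \<Longrightarrow> v \<in> carrier_vec n \<Longrightarrow> w \<in> carrier_vec n \<Longrightarrow>
  u \<bullet>c (v + w) = u \<bullet>c v + u \<bullet>c (w::complex vec)"
  by (simp add: conjugate_add_vec[of _ n] scalar_prod_add_distrib[of _ n])

lemma ip_minus_left: "u \<in> carrier_vec n \<Longrightarrow> v \<in> carrier_vec n \<Longrightarrow> w \<in> carrier_vec n \<Longrightarrow>
  (u - v) \<bullet>c w = u \<bullet>c w - v \<bullet>c (w::complex vec)"
  by (rule minus_scalar_prod_distrib[of _ n]) auto

lemma ip_minus_right: "u \<in> carrier_vec n \<Longrightarrow> v \<in> carrier_vec n \<Longrightarrow> w \<in> carrier_vec n \<Longrightarrow>
  u \<bullet>c (v - w) = u \<bullet>c v - u \<bullet>c (w::complex vec)"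
  by (simp add: conj_minus_vec[of _ n] scalar_prod_minus_distrib[of _ n])

lemma ip_smult_left: "u \<in> carrier_vec n \<Longrightarrow> w \<in> carrier_vec n \<Longrightarrow>
  (c \<cdot>\<^sub>v u) \<bullet>c w = c * (u \<bullet>c (w::complex vec))"
  by (rule smult_scalar_prod_distrib[of _ n]) auto

lemma ip_smult_right: "u \<in> carrier_vec n \<Longrightarrow> w \<in> carrier_vec n \<Longrightarrow>
  u \<bullet>c (c \<cdot>\<^sub>v w) = cnj c * (u \<bullet>c (w::complex vec))"
  by (simp add: conjugate_smult_vec scalar_prod_smult_distrib[of _ n])

lemma ip_conj: "u \<in> carrier_vec n \<Longrightarrow> w \<in> carrier_vec n \<Longrightarrow>
  cnj (u \<bullet>c w) = w \<bullet>c (u::complex vec)"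
proof -
  assume a: "u \<in> carrier_vec n" "w \<in> carrier_vec n"
  have "u \<bullet>c w = cnj (conjugate u \<bullet> w)" using conjugate_conjugate_sprod[OF a] by simp
  hence "cnj (u \<bullet>c w) = conjugate u \<bullet> w" by simp
  also have "\<dots> = w \<bullet>c u" using conjugate_vec_sprod_comm[OF a(2) a(1)] by simp
  finally show ?thesis .
qed

lemma ip_zero_left: "w \<in> carrier_vec n \<Longrightarrow> 0\<^sub>v n \<bullet>c (w::complex vec) = 0"
  by simp
lemma ip_zero_right: "w \<in> carrier_vec n \<Longrightarrow> w \<bullet>c 0\<^sub>v n = (0::complex)"
  by simp

lemma ip_self_ge0: "0 \<le> Re (u \<bullet>c (u::complex vec))"
  using conjugate_square_ge_0_vec[of u] by (simp add: less_eq_complex_def)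
lemma ip_self_real: "Im (u \<bullet>c (u::complex vec)) = 0"
  using conjugate_square_ge_0_vec[of u] by (simp add: less_eq_complex_def)
lemma ip_self_ofreal: "u \<bullet>c (u::complex vec) = of_real (Re (u \<bullet>c u))"
  using ip_self_real[of u] by (simp add: complex_eq_iff)
lemma ip_self_zero: "u \<in> carrier_vec n \<Longrightarrow> u \<bullet>c (u::complex vec) = 0 \<longleftrightarrow> u = 0\<^sub>v n"
  by simp
lemma ip_self_Re_zero: "u \<in> carrier_vec n \<Longrightarrow> Re (u \<bullet>c (u::complex vec)) = 0 \<longleftrightarrow> u = 0\<^sub>v n"
  using ip_self_zero[of u n] ip_self_ofreal[of u] by (metis of_real_0 zero_complex.sel(1))

lemma vnorm_sq: "(vnorm u)^2 = Re (u \<bullet>c u)"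
  unfolding vnorm_def by (rule real_sqrt_pow2[OF ip_self_ge0])
lemma vnorm_ge0: "0 \<le> vnorm u" unfolding vnorm_def by (simp add: ip_self_ge0)
lemma ip_self_vnorm: "u \<bullet>c u = of_real ((vnorm u)^2)"
  using ip_self_ofreal[of u] vnorm_sq[of u] by simp
lemma vnorm_zero_iff: "u \<in> carrier_vec n \<Longrightarrow> vnorm u = 0 \<longleftrightarrow> u = 0\<^sub>v n"
  using ip_self_Re_zero[of u n] vnorm_sq[of u] by (metis power_eq_0_iff zero_less_numeral)
lemma vnorm_zero[simp]: "vnorm (0\<^sub>v n) = 0"
  using vnorm_zero_iff[of "0\<^sub>v n" n] by simp

lemma vnorm_smult: "u \<in> carrier_vec n \<Longrightarrow> vnorm (c \<cdot>\<^sub>v u) = cmod c * vnorm u"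
proof -
  assume u: "u \<in> carrier_vec n"
  have "(c \<cdot>\<^sub>v u) \<bullet>c (c \<cdot>\<^sub>v u) = c * cnj c * (u \<bullet>c u)"
    using u by (simp add: ip_smult_left[of _ n] ip_smult_right[of _ n])
  also have "\<dots> = of_real ((cmod c)^2 * (vnorm u)^2)"
  proof -
    have "c * cnj c = of_real ((cmod c)^2)" using complex_norm_square[of c] by simp
    thus ?thesis by (simp add: ip_self_vnorm)
  qed
  finally have "(vnorm (c \<cdot>\<^sub>v u))^2 = (cmod c * vnorm u)^2"
    using vnorm_sq[of "c \<cdot>\<^sub>v u"] by (simp add: power_mult_distrib)
  thus ?thesis using vnorm_ge0 by (simp add: power2_eq_iff_nonneg)
qed

lemma pythag: assumes "u \<in> carrier_vec n" "v \<in> carrier_vec n" "u \<bullet>c v = (0::complex)"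
  shows "(vnorm (u + v))^2 = (vnorm u)^2 + (vnorm v)^2"
proof -
  have vu: "v \<bullet>c u = 0" using ip_conj[of u n v] assms by simp
  have "(u+v) \<bullet>c (u+v) = u \<bullet>c u + v \<bullet>c v"
    using assms vu by (simp add: ip_add_left[of _ n] ip_add_right[of _ n])
  thus ?thesis by (simp add: vnorm_sq)
qed

lemma cauchy_schwarz: assumes u: "u \<in> carrier_vec n" and v: "v \<in> carrier_vec n"
  shows "cmod (u \<bullet>c v) \<le> vnorm u * vnorm (v::complex vec)"
proof (cases "v = 0\<^sub>v n")
  case True thus ?thesis using u by (simp add: vnorm_ge0)
next
  case False
  define d where "d = Re (v \<bullet>c v)"
  have d: "d > 0" using ip_self_ge0[of v] ip_self_Re_zero[OF v] False d_def by force
  have vv: "v \<bullet>c v = of_real d" using ip_self_ofreal d_def by simp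
  define c where "c = (u \<bullet>c v) / of_real d"
  define w where "w = u - c \<cdot>\<^sub>v v"
  have w: "w \<in> carrier_vec n" using u v w_def by simp
  have wv: "w \<bullet>c (c \<cdot>\<^sub>v v) = 0"
    using u v d unfolding w_def c_def
    by (simp add: ip_minus_left[of _ n] ip_smult_left[of _ n] ip_smult_right[of _ n] vv)
  have uu: "u = w + c \<cdot>\<^sub>v v" using u v unfolding w_def by auto
  have "(vnorm u)^2 = (vnorm w)^2 + (vnorm (c \<cdot>\<^sub>v v))^2"
    using pythag[OF w _ wv] v uu by simp
  hence "(cmod c * vnorm v)^2 \<le> (vnorm u)^2" using vnorm_smult[OF v] by simp
  moreover have "(cmod c * vnorm v)^2 = (cmod (u \<bullet>c v))^2 / d"
  proof -
    have vd: "(vnorm v)^2 = d" using vnorm_sq[of v] d_def by simp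
    have "(cmod c * vnorm v)^2 = (cmod (u \<bullet>c v))^2 / d^2 * (vnorm v)^2"
      unfolding c_def using d by (simp add: norm_divide power_mult_distrib power_divide)
    also have "\<dots> = (cmod (u \<bullet>c v))^2 / d" using d vd by (simp add: power2_eq_square)
    finally show ?thesis .
  qed
  ultimately have "(cmod (u \<bullet>c v))^2 \<le> (vnorm u)^2 * d" using d
    by (simp add: divide_le_eq)
  also have "\<dots> = (vnorm u * vnorm v)^2" using vnorm_sq[of v] d_def by (simp add: power_mult_distrib)
  finally show ?thesis using vnorm_ge0[of u] vnorm_ge0[of v]
    by (meson mult_nonneg_nonneg power2_le_imp_le)
qed

lemma vnorm_triangle: assumes u: "u \<in> carrier_vec n" and v: "v \<in> carrier_vec n"
  shows "vnorm (u + v) \<le> vnorm u + vnorm (v::complex vec)"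
proof -
  have "(u+v) \<bullet>c (u+v) = u \<bullet>c u + v \<bullet>c v + (u \<bullet>c v + v \<bullet>c u)"
    using u v by (simp add: ip_add_left[of _ n] ip_add_right[of _ n])
  hence "(vnorm (u+v))^2 = (vnorm u)^2 + (vnorm v)^2 + Re (u \<bullet>c v + v \<bullet>c u)"
    by (simp add: vnorm_sq)
  moreover have "Re (u \<bullet>c v + v \<bullet>c u) = 2 * Re (u \<bullet>c v)"
    using ip_conj[OF u v] by (metis complex_cnj_cnj complex_add_cnj mult_2 of_real_add Re_complex_of_real)
  moreover have "Re (u \<bullet>c v) \<le> vnorm u * vnorm v"
    using cauchy_schwarz[OF u v] complex_Re_le_cmod order_trans by blast
  ultimately have "(vnorm (u+v))^2 \<le> (vnorm u + vnorm v)^2" by (simp add: power2_sum)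
  thus ?thesis using vnorm_ge0[of u] vnorm_ge0[of v] by (meson add_nonneg_nonneg power2_le_imp_le)
qed

lemma vnorm_minus: assumes u: "u \<in> carrier_vec n" and v: "v \<in> carrier_vec n"
  shows "vnorm (u - v) \<le> vnorm u + vnorm (v::complex vec)"
proof -
  have "u - v = u + (-1) \<cdot>\<^sub>v v" using u v by auto
  thus ?thesis using vnorm_triangle[OF u, of "(-1) \<cdot>\<^sub>v v"] vnorm_smult[OF v, of "-1"] v by simp
qed



lemma ip_sum: assumes "u \<in> carrier_vec n" "v \<in> carrier_vec n"
  shows "u \<bullet>c v = (\<Sum>i<n. u$i * cnj (v$i))"
  using assms unfolding scalar_prod_def by (auto simp: lessThan_atLeast0)

lemma mv_index: assumes "M \<in> carrier_mat m n" "x \<in> carrier_vec n" "i < m"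
  shows "(M *\<^sub>v x) $ i = (\<Sum>j<n. M $$ (i,j) * x $ j)"
  using assms by (auto simp: scalar_prod_def lessThan_atLeast0 intro!: sum.cong)

lemma mat_adjoint_carrier: "M \<in> carrier_mat m n \<Longrightarrow> mat_adjoint M \<in> carrier_mat n m"
  unfolding mat_adjoint_def by auto

lemma mat_adjoint_index: "M \<in> carrier_mat m n \<Longrightarrow> i < n \<Longrightarrow> j < m \<Longrightarrow>
   mat_adjoint M $$ (i,j) = cnj (M $$ (j,i))"
  unfolding mat_adjoint_def mat_of_rows_def by auto

lemma adjoint_ip: assumes M: "(M::complex mat) \<in> carrier_mat m n" and x: "x \<in> carrier_vec n"
  and y: "y \<in> carrier_vec m"
  shows "(M *\<^sub>v x) \<bullet>c y = x \<bullet>c (mat_adjoint M *\<^sub>v y)"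
proof -
  have MA: "mat_adjoint M \<in> carrier_mat n m" using mat_adjoint_carrier[OF M] .
  have "(M *\<^sub>v x) \<bullet>c y = (\<Sum>i<m. (\<Sum>j<n. M $$ (i,j) * x $ j) * cnj (y $ i))"
    using M x y mv_index[OF M x] by (simp add: ip_sum[of _ m] del: index_mult_mat_vec)
  also have "\<dots> = (\<Sum>i<m. \<Sum>j<n. x $ j * (M $$ (i,j) * cnj (y $ i)))"
    unfolding sum_distrib_right by (intro sum.cong refl) (simp add: mult.commute mult.left_commute)
  also have "\<dots> = (\<Sum>j<n. \<Sum>i<m. x $ j * (M $$ (i,j) * cnj (y $ i)))"
    by (rule sum.swap)
  also have "\<dots> = (\<Sum>j<n. x $ j * cnj (\<Sum>i<m. mat_adjoint M $$ (j,i) * y $ i))"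
    using M by (simp add: sum_distrib_left mat_adjoint_index)
  also have "\<dots> = x \<bullet>c (mat_adjoint M *\<^sub>v y)"
    using MA x y mv_index[OF MA y] by (simp add: ip_sum[of _ n] del: index_mult_mat_vec)
  finally show ?thesis .
qed

lemma adjoint_ip2: assumes M: "(M::complex mat) \<in> carrier_mat m n" and x: "x \<in> carrier_vec n"
  and y: "y \<in> carrier_vec m"
  shows "(mat_adjoint M *\<^sub>v y) \<bullet>c x = y \<bullet>c (M *\<^sub>v x)"
proof -
  have MA: "mat_adjoint M \<in> carrier_mat n m" using mat_adjoint_carrier[OF M] .
  have "y \<bullet>c (M *\<^sub>v x) = cnj ((M *\<^sub>v x) \<bullet>c y)" using ip_conj[of "M *\<^sub>v x" m y] M x y by simp
  also have "\<dots> = cnj (x \<bullet>c (mat_adjoint M *\<^sub>v y))" using adjoint_ip[OF M x y] by simp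
  also have "\<dots> = (mat_adjoint M *\<^sub>v y) \<bullet>c x" using ip_conj[of x n] MA x y by simp
  finally show ?thesis by simp
qed

lemma herm_ip: assumes "hermitian_mat A" "A \<in> carrier_mat n n" "x \<in> carrier_vec n" "y \<in> carrier_vec n"
  shows "(A *\<^sub>v x) \<bullet>c y = x \<bullet>c (A *\<^sub>v y)"
  using adjoint_ip[of A n n x y] assms unfolding hermitian_mat_def by simp

lemma four_block_mult_vec:
  assumes A: "A \<in> carrier_mat p p" and B: "B \<in> carrier_mat p q" and D: "D \<in> carrier_mat q p"
   and E: "E \<in> carrier_mat q q" and x: "x \<in> carrier_vec p" and y: "y \<in> carrier_vec q"
  shows "four_block_mat A B D E *\<^sub>v (x @\<^sub>v y) = (A *\<^sub>v x + B *\<^sub>v y) @\<^sub>v (D *\<^sub>v x + E *\<^sub>v y)"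
proof (rule eq_vecI)
  have F: "four_block_mat A B D E \<in> carrier_mat (p+q) (p+q)" using A E by simp
  have c1: "A *\<^sub>v x + B *\<^sub>v y \<in> carrier_vec p" using A B x y by simp
  have c2: "D *\<^sub>v x + E *\<^sub>v y \<in> carrier_vec q" using D E x y by simp
  show "dim_vec (four_block_mat A B D E *\<^sub>v (x @\<^sub>v y)) = dim_vec ((A *\<^sub>v x + B *\<^sub>v y) @\<^sub>v (D *\<^sub>v x + E *\<^sub>v y))"
    using F c1 c2 A B by simp
  fix i assume "i < dim_vec ((A *\<^sub>v x + B *\<^sub>v y) @\<^sub>v (D *\<^sub>v x + E *\<^sub>v y))"
  hence i: "i < p + q" using c1 c2 B E by simp
  have rA: "row A i \<in> carrier_vec p" "row B i \<in> carrier_vec q"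
    "row D (i-p) \<in> carrier_vec p" "row E (i-p) \<in> carrier_vec q"
    using row_carrier[of A i] row_carrier[of B i] row_carrier[of D "i-p"] row_carrier[of E "i-p"]
      carrier_matD(2)[OF A] carrier_matD(2)[OF B] carrier_matD(2)[OF D] carrier_matD(2)[OF E]
    by simp_all
  have L: "(four_block_mat A B D E *\<^sub>v (x @\<^sub>v y)) $ i = row (four_block_mat A B D E) i \<bullet> (x @\<^sub>v y)"
    using F i by (simp only: index_mult_mat_vec carrier_matD)
  have R: "((A *\<^sub>v x + B *\<^sub>v y) @\<^sub>v (D *\<^sub>v x + E *\<^sub>v y)) $ i =
     (if i < p then (A *\<^sub>v x + B *\<^sub>v y) $ i else (D *\<^sub>v x + E *\<^sub>v y) $ (i - p))"
    using c1 c2 i by (simp only: index_append_vec carrier_vecD)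
  show "(four_block_mat A B D E *\<^sub>v (x @\<^sub>v y)) $ i = ((A *\<^sub>v x + B *\<^sub>v y) @\<^sub>v (D *\<^sub>v x + E *\<^sub>v y)) $ i"
  proof (cases "i < p")
    case True
    have "row (four_block_mat A B D E) i \<bullet> (x @\<^sub>v y) = row A i \<bullet> x + row B i \<bullet> y"
      unfolding row_four_block_mat(1)[OF A B D E True] by (rule scalar_prod_append[OF rA(1,2) x y])
    also have "\<dots> = (A *\<^sub>v x + B *\<^sub>v y) $ i"
      using True A B by (subst index_add_vec(1)) (auto simp del: index_add_vec)
    finally show ?thesis using L R True by (simp only: if_True)
  next
    case False
    have "row (four_block_mat A B D E) i \<bullet> (x @\<^sub>v y) = row D (i-p) \<bullet> x + row E (i-p) \<bullet> y"
      unfolding row_four_block_mat(2)[OF A B D E False i] by (rule scalar_prod_append[OF rA(3,4) x y])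
    also have "\<dots> = (D *\<^sub>v x + E *\<^sub>v y) $ (i-p)"
      using False i D E by (subst index_add_vec(1)) (auto simp del: index_add_vec)
    finally show ?thesis using L R False by (simp only: if_False)
  qed
qed



lemma smult_minus_vec: "x \<in> carrier_vec n \<Longrightarrow> y \<in> carrier_vec n \<Longrightarrow>
  (c::complex) \<cdot>\<^sub>v x - c \<cdot>\<^sub>v y = c \<cdot>\<^sub>v (x - y)"
  by (intro eq_vecI) (auto simp: algebra_simps)

lemma smult_zero_zero: "(0::complex) \<cdot>\<^sub>v 0\<^sub>v n = 0\<^sub>v n"
  by (intro eq_vecI) auto

lemma vec_diff_zero: "w \<in> carrier_vec n \<Longrightarrow> w' \<in> carrier_vec n \<Longrightarrow> w - w' = 0\<^sub>v n \<Longrightarrow> w = (w'::complex vec)"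
proof -
  assume a: "w \<in> carrier_vec n" "w' \<in> carrier_vec n" "w - w' = 0\<^sub>v n"
  have "w = w' + (w - w')" using a(1,2) by auto
  thus ?thesis using a by simp
qed

definition subsp :: "nat \<Rightarrow> complex vec set \<Rightarrow> bool" where
  "subsp n S \<longleftrightarrow> S \<subseteq> carrier_vec n \<and> 0\<^sub>v n \<in> S \<and> (\<forall>x\<in>S. \<forall>y\<in>S. x + y \<in> S)
     \<and> (\<forall>c. \<forall>x\<in>S. c \<cdot>\<^sub>v x \<in> S)"

definition hasproj :: "nat \<Rightarrow> complex vec set \<Rightarrow> bool" where
  "hasproj n S \<longleftrightarrow> (\<forall>x\<in>carrier_vec n. \<exists>w\<in>S. \<forall>u\<in>S. (x - w) \<bullet>c u = 0)"

lemma subsp_carrier: "subsp n S \<Longrightarrow> x \<in> S \<Longrightarrow> x \<in> carrier_vec n"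
  unfolding subsp_def by auto
lemma subsp_zero: "subsp n S \<Longrightarrow> 0\<^sub>v n \<in> S"
  unfolding subsp_def by auto
lemma subsp_add: "subsp n S \<Longrightarrow> x \<in> S \<Longrightarrow> y \<in> S \<Longrightarrow> x + y \<in> S"
  unfolding subsp_def by auto
lemma subsp_smult: "subsp n S \<Longrightarrow> x \<in> S \<Longrightarrow> c \<cdot>\<^sub>v x \<in> S"
  unfolding subsp_def by auto
lemma subsp_minus: assumes "subsp n S" "x \<in> S" "y \<in> S" shows "x - y \<in> S"
proof -
  have "x - y = x + (-1) \<cdot>\<^sub>v y" using subsp_carrier[OF assms(1)] assms by auto
  thus ?thesis using assms subsp_add subsp_smult by metis
qed

lemma proj_unique: assumes S: "subsp n S" and x: "x \<in> carrier_vec n"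
  and w: "w \<in> S" "\<forall>u\<in>S. (x - w) \<bullet>c u = 0"
  and w': "w' \<in> S" "\<forall>u\<in>S. (x - w') \<bullet>c u = 0"
  shows "w = w'"
proof -
  have ww: "w - w' \<in> S" using subsp_minus[OF S w(1) w'(1)] .
  have c: "w \<in> carrier_vec n" "w' \<in> carrier_vec n" using subsp_carrier[OF S] w w' by auto
  have "w - w' = (x - w') - (x - w)" using c x by auto
  hence "(w - w') \<bullet>c (w - w') = (x - w') \<bullet>c (w - w') - (x - w) \<bullet>c (w - w')"
    using c x by (metis ip_minus_left minus_carrier_vec)
  also have "\<dots> = 0" using w(2) w'(2) ww by simp
  finally show ?thesis using c ip_self_zero[of "w - w'" n] vec_diff_zero[of w n w'] by simp
qed

lemma proj_eq: assumes S: "subsp n S" and x: "x \<in> carrier_vec n"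
  and w: "w \<in> S" "\<forall>u\<in>S. (x - w) \<bullet>c u = 0"
  shows "orth_proj S x = w"
  unfolding orth_proj_def
  by (rule the_equality, use w in blast, use proj_unique[OF S x] w in blast)

lemma proj_char: assumes S: "subsp n S" and H: "hasproj n S" and x: "x \<in> carrier_vec n"
  shows "orth_proj S x \<in> S" "\<forall>u\<in>S. (x - orth_proj S x) \<bullet>c u = 0"
proof -
  obtain w where w: "w \<in> S" "\<forall>u\<in>S. (x - w) \<bullet>c u = 0" using H x unfolding hasproj_def by blast
  thus "orth_proj S x \<in> S" "\<forall>u\<in>S. (x - orth_proj S x) \<bullet>c u = 0"
    using proj_eq[OF S x w] by auto
qed

lemma proj_carrier: "subsp n S \<Longrightarrow> hasproj n S \<Longrightarrow> x \<in> carrier_vec n \<Longrightarrow> orth_proj S x \<in> carrier_vec n"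
  using proj_char subsp_carrier by blast

lemma proj_id: assumes S: "subsp n S" and x: "x \<in> S" shows "orth_proj S x = x"
proof -
  have xc: "x \<in> carrier_vec n" using subsp_carrier[OF S x] .
  have "x - x = 0\<^sub>v n" using xc by auto
  hence "\<forall>u\<in>S. (x - x) \<bullet>c u = 0" using subsp_carrier[OF S] by simp
  thus ?thesis using proj_eq[OF S xc x] by simp
qed

lemma proj_add: assumes S: "subsp n S" and H: "hasproj n S" and x: "x \<in> carrier_vec n" and y: "y \<in> carrier_vec n"
  shows "orth_proj S (x + y) = orth_proj S x + orth_proj S y"
proof (rule proj_eq[OF S])
  note px = proj_char[OF S H x] and py = proj_char[OF S H y]
  have c: "orth_proj S x \<in> carrier_vec n" "orth_proj S y \<in> carrier_vec n"
    using px py subsp_carrier[OF S] by auto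
  show "x + y \<in> carrier_vec n" using x y by simp
  show "orth_proj S x + orth_proj S y \<in> S" using subsp_add[OF S px(1) py(1)] .
  show "\<forall>u\<in>S. (x + y - (orth_proj S x + orth_proj S y)) \<bullet>c u = 0"
  proof
    fix u assume u: "u \<in> S"
    have uc: "u \<in> carrier_vec n" using subsp_carrier[OF S u] .
    have "x + y - (orth_proj S x + orth_proj S y) = (x - orth_proj S x) + (y - orth_proj S y)"
      using x y c by auto
    thus "(x + y - (orth_proj S x + orth_proj S y)) \<bullet>c u = 0"
      using px(2) py(2) u uc x y c by (simp add: ip_add_left[of _ n])
  qed
qed

lemma proj_smult: assumes S: "subsp n S" and H: "hasproj n S" and x: "x \<in> carrier_vec n"
  shows "orth_proj S (c \<cdot>\<^sub>v x) = c \<cdot>\<^sub>v orth_proj S x"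
proof (rule proj_eq[OF S])
  note px = proj_char[OF S H x]
  have cx: "orth_proj S x \<in> carrier_vec n" using px subsp_carrier[OF S] by auto
  show "c \<cdot>\<^sub>v x \<in> carrier_vec n" using x by simp
  show "c \<cdot>\<^sub>v orth_proj S x \<in> S" using subsp_smult[OF S px(1)] .
  show "\<forall>u\<in>S. (c \<cdot>\<^sub>v x - c \<cdot>\<^sub>v orth_proj S x) \<bullet>c u = 0"
  proof
    fix u assume u: "u \<in> S"
    have uc: "u \<in> carrier_vec n" using subsp_carrier[OF S u] .
    have "c \<cdot>\<^sub>v x - c \<cdot>\<^sub>v orth_proj S x = c \<cdot>\<^sub>v (x - orth_proj S x)"
      using x cx by (simp add: smult_minus_vec[of _ n])
    thus "(c \<cdot>\<^sub>v x - c \<cdot>\<^sub>v orth_proj S x) \<bullet>c u = 0"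
      using px(2) u uc x cx by (simp add: ip_smult_left[of _ n])
  qed
qed

lemma proj_ip_left: assumes S: "subsp n S" and H: "hasproj n S" and x: "x \<in> carrier_vec n" and u: "u \<in> S"
  shows "x \<bullet>c u = orth_proj S x \<bullet>c u"
proof -
  note px = proj_char[OF S H x]
  have c: "orth_proj S x \<in> carrier_vec n" "u \<in> carrier_vec n" using px u subsp_carrier[OF S] by auto
  have "(x - orth_proj S x) \<bullet>c u = 0" using px u by auto
  thus ?thesis using ip_minus_left[OF x c(1) c(2)] by simp
qed

lemma proj_ip_right: assumes S: "subsp n S" and H: "hasproj n S" and x: "x \<in> carrier_vec n" and u: "u \<in> S"
  shows "u \<bullet>c x = u \<bullet>c orth_proj S x"
proof -
  have c: "orth_proj S x \<in> carrier_vec n" "u \<in> carrier_vec n" using proj_char[OF S H x] u subsp_carrier[OF S] by auto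
  have "u \<bullet>c x = cnj (x \<bullet>c u)" using ip_conj[OF x c(2)] by simp
  also have "\<dots> = cnj (orth_proj S x \<bullet>c u)" using proj_ip_left[OF S H x u] by simp
  also have "\<dots> = u \<bullet>c orth_proj S x" using ip_conj[OF c(1) c(2)] by simp
  finally show ?thesis .
qed

lemma lin_expand:
  fixes G :: "complex vec \<Rightarrow> complex"
  assumes add: "\<And>x y. x \<in> carrier_vec n \<Longrightarrow> y \<in> carrier_vec n \<Longrightarrow> G (x + y) = G x + G y"
  and hom: "\<And>c x. x \<in> carrier_vec n \<Longrightarrow> G (c \<cdot>\<^sub>v x) = c * G x"
  and u: "u \<in> carrier_vec n"
  shows "G u = (\<Sum>i<n. u $ i * G (unit_vec n i))"
proof -
  define part where "part k = vec n (\<lambda>i. if i < k then u $ i else 0)" for k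
  have pc: "part k \<in> carrier_vec n" for k unfolding part_def by simp
  have G0: "G (0\<^sub>v n) = 0"
    using hom[of "0\<^sub>v n" 0] smult_zero_zero[of n] by simp
  have "k \<le> n \<Longrightarrow> G (part k) = (\<Sum>i<k. u $ i * G (unit_vec n i))" for k
  proof (induction k)
    case 0
    have "part 0 = 0\<^sub>v n" unfolding part_def by auto
    thus ?case using G0 by simp
  next
    case (Suc k)
    have "part (Suc k) = part k + u $ k \<cdot>\<^sub>v unit_vec n k"
      unfolding part_def using Suc.prems by (intro eq_vecI) (auto simp: unit_vec_def less_Suc_eq)
    hence "G (part (Suc k)) = G (part k) + u $ k * G (unit_vec n k)"
      using add[OF pc, of "u $ k \<cdot>\<^sub>v unit_vec n k"] hom[of "unit_vec n k"] by simp
    thus ?case using Suc by simp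
  qed
  moreover have "part n = u" unfolding part_def using u by (intro eq_vecI) auto
  ultimately show ?thesis by force
qed

lemma ip_unit_vec: "(x::complex vec) \<in> carrier_vec n \<Longrightarrow> i < n \<Longrightarrow> x \<bullet>c unit_vec n i = x $ i"
proof -
  assume x: "x \<in> carrier_vec n" and i: "i < n"
  have "x \<bullet>c unit_vec n i = (\<Sum>j<n. x $ j * cnj (unit_vec n i $ j))" using x by (simp add: ip_sum[of _ n])
  also have "\<dots> = (\<Sum>j<n. if j = i then x $ i else 0)" by (rule sum.cong) (auto simp: unit_vec_def)
  also have "\<dots> = x $ i" using i by simp
  finally show ?thesis .
qed

lemma vnorm_unit_vec: "i < n \<Longrightarrow> vnorm (unit_vec n i) = 1"
  using ip_unit_vec[of "unit_vec n i" n i] vnorm_sq[of "unit_vec n i"]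
  by (simp add: vnorm_def)

lemma cmod_index_le: assumes "x \<in> carrier_vec n" "i < n" shows "cmod (x $ i) \<le> vnorm x"
  using cauchy_schwarz[OF assms(1), of "unit_vec n i"] ip_unit_vec[OF assms] vnorm_unit_vec[OF assms(2)]
  by simp

lemma riesz: assumes S: "subsp n S" and H: "hasproj n S"
  and add: "\<And>x y. x \<in> S \<Longrightarrow> y \<in> S \<Longrightarrow> g (x + y) = g x + g y"
  and hom: "\<And>c x. x \<in> S \<Longrightarrow> g (c \<cdot>\<^sub>v x) = c * g x"
  shows "\<exists>r\<in>S. \<forall>u\<in>S. g u = u \<bullet>c r"
proof -
  define G where "G u = g (orth_proj S u)" for u
  have Gadd: "G (x + y) = G x + G y" if "x \<in> carrier_vec n" "y \<in> carrier_vec n" for x y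
    unfolding G_def using proj_add[OF S H that] add proj_char[OF S H] that by simp
  have Ghom: "G (c \<cdot>\<^sub>v x) = c * G x" if "x \<in> carrier_vec n" for c x
    unfolding G_def using proj_smult[OF S H that] hom proj_char[OF S H] that by simp
  define r0 where "r0 = vec n (\<lambda>i. cnj (G (unit_vec n i)))"
  have r0: "r0 \<in> carrier_vec n" unfolding r0_def by simp
  have Gr: "G u = u \<bullet>c r0" if "u \<in> carrier_vec n" for u
    using lin_expand[of n G, OF Gadd Ghom that] that r0 by (simp add: ip_sum[of _ n] r0_def)
  show ?thesis
  proof (intro bexI ballI)
    show "orth_proj S r0 \<in> S" using proj_char[OF S H r0] by simp
    fix u assume u: "u \<in> S"
    have uc: "u \<in> carrier_vec n" using subsp_carrier[OF S u] .
    have "g u = G u" unfolding G_def using proj_id[OF S u] by simp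
    also have "\<dots> = u \<bullet>c r0" using Gr[OF uc] .
    also have "\<dots> = u \<bullet>c orth_proj S r0" using proj_ip_right[OF S H r0 u] .
    finally show "g u = u \<bullet>c orth_proj S r0" .
  qed
qed



definition linon :: "complex vec set \<Rightarrow> nat \<Rightarrow> (complex vec \<Rightarrow> complex vec) \<Rightarrow> bool" where
  "linon S m f \<longleftrightarrow> (\<forall>x\<in>S. f x \<in> carrier_vec m) \<and> (\<forall>x\<in>S. \<forall>y\<in>S. f (x + y) = f x + f y)
     \<and> (\<forall>c. \<forall>x\<in>S. f (c \<cdot>\<^sub>v x) = c \<cdot>\<^sub>v f x)"

lemma linonD: assumes "linon S m f"
  shows "x \<in> S \<Longrightarrow> f x \<in> carrier_vec m" "x \<in> S \<Longrightarrow> y \<in> S \<Longrightarrow> f (x + y) = f x + f y"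
    "x \<in> S \<Longrightarrow> f (c \<cdot>\<^sub>v x) = c \<cdot>\<^sub>v f x"
  using assms unfolding linon_def by auto

lemma linon_zero: assumes S: "subsp n S" and f: "linon S m f" shows "f (0\<^sub>v n) = 0\<^sub>v m"
proof -
  have "f (0\<^sub>v n) = f (0 \<cdot>\<^sub>v 0\<^sub>v n)" by (simp add: smult_zero_zero)
  also have "\<dots> = 0 \<cdot>\<^sub>v f (0\<^sub>v n)" using linonD(3)[OF f subsp_zero[OF S]] .
  also have "\<dots> = 0\<^sub>v m" using linonD(1)[OF f subsp_zero[OF S]] by auto
  finally show ?thesis .
qed

lemma sum_cmod_le: "cmod (\<Sum>i<n. (a i :: complex)) \<le> (\<Sum>i<n. cmod (a i))"
  by (rule norm_sum)

lemma opnorm_bound: assumes S: "subsp n S" and H: "hasproj n S" and f: "linon S m f"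
  shows "0 \<le> opnorm_on S f" "\<And>x. x \<in> S \<Longrightarrow> vnorm (f x) \<le> opnorm_on S f * vnorm x"
proof -
  define K where "K = (\<Sum>i<n. vnorm (f (orth_proj S (unit_vec n i))))"
  have K0: "0 \<le> K" unfolding K_def by (simp add: sum_nonneg vnorm_ge0)
  have bound: "vnorm (f x) \<le> K * vnorm x" if x: "x \<in> S" for x
  proof -
    have xc: "x \<in> carrier_vec n" using subsp_carrier[OF S x] .
    define y where "y = f x"
    have yc: "y \<in> carrier_vec m" unfolding y_def using linonD(1)[OF f x] .
    define \<psi> where "\<psi> u = f (orth_proj S u) \<bullet>c y" for u
    have Pc: "\<And>u. u \<in> carrier_vec n \<Longrightarrow> orth_proj S u \<in> S" using proj_char[OF S H] by blast
    have fPc: "\<And>u. u \<in> carrier_vec n \<Longrightarrow> f (orth_proj S u) \<in> carrier_vec m"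
      using Pc linonD(1)[OF f] by blast
    have padd: "\<psi> (a + b) = \<psi> a + \<psi> b" if "a \<in> carrier_vec n" "b \<in> carrier_vec n" for a b
      unfolding \<psi>_def using proj_add[OF S H that] linonD(2)[OF f Pc[OF that(1)] Pc[OF that(2)]]
        ip_add_left[OF fPc[OF that(1)] fPc[OF that(2)] yc] by simp
    have phom: "\<psi> (c \<cdot>\<^sub>v a) = c * \<psi> a" if "a \<in> carrier_vec n" for c a
      unfolding \<psi>_def using proj_smult[OF S H that] linonD(3)[OF f Pc[OF that]]
        ip_smult_left[OF fPc[OF that] yc] by simp
    have "\<psi> x = (\<Sum>i<n. x $ i * \<psi> (unit_vec n i))"
      using lin_expand[of n \<psi>, OF padd phom xc] .
    moreover have "\<psi> x = y \<bullet>c y" unfolding \<psi>_def y_def using proj_id[OF S x] by simp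
    ultimately have "cmod (y \<bullet>c y) \<le> (\<Sum>i<n. cmod (x $ i * \<psi> (unit_vec n i)))"
      using sum_cmod_le by metis
    also have "\<dots> \<le> (\<Sum>i<n. vnorm x * (vnorm (f (orth_proj S (unit_vec n i))) * vnorm y))"
    proof (rule sum_mono)
      fix i assume "i \<in> {..<n}"
      hence i: "i < n" by simp
      have "cmod (\<psi> (unit_vec n i)) \<le> vnorm (f (orth_proj S (unit_vec n i))) * vnorm y"
        unfolding \<psi>_def using cauchy_schwarz[OF fPc yc] by simp
      moreover have "cmod (x $ i) \<le> vnorm x" using cmod_index_le[OF xc i] .
      ultimately show "cmod (x $ i * \<psi> (unit_vec n i)) \<le> vnorm x * (vnorm (f (orth_proj S (unit_vec n i))) * vnorm y)"
        by (simp add: norm_mult mult_mono vnorm_ge0)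
    qed
    also have "\<dots> = K * vnorm x * vnorm y" unfolding K_def by (simp add: sum_distrib_left sum_distrib_right ac_simps)
    finally have le0: "cmod (y \<bullet>c y) \<le> K * vnorm x * vnorm y" .
    have "cmod (y \<bullet>c y) = (vnorm y)^2" unfolding ip_self_vnorm[of y] norm_of_real by simp
    hence le: "(vnorm y)^2 \<le> K * vnorm x * vnorm y" using le0 by simp
    show ?thesis
    proof (cases "vnorm y = 0")
      case True thus ?thesis using K0 vnorm_ge0[of x] y_def by simp
    next
      case False
      hence "vnorm y > 0" using vnorm_ge0[of y] by simp
      thus ?thesis using le y_def by (simp add: power2_eq_square)
    qed
  qed
  define T where "T = {vnorm (f x) | x. x \<in> S \<and> vnorm x \<le> 1}"
  have bdd: "bdd_above T" unfolding T_def
  proof (rule bdd_aboveI[of _ K])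
    fix z assume "z \<in> {vnorm (f x) |x. x \<in> S \<and> vnorm x \<le> 1}"
    then obtain x where x: "x \<in> S" "vnorm x \<le> 1" "z = vnorm (f x)" by blast
    have "K * vnorm x \<le> K" using K0 x(2) by (simp add: mult_left_le)
    thus "z \<le> K" using bound[OF x(1)] x(3) by linarith
  qed
  have zT: "0 \<in> T" unfolding T_def using subsp_zero[OF S] linon_zero[OF S f] by force
  have eq: "opnorm_on S f = Sup T" unfolding opnorm_on_def T_def by simp
  show nn: "0 \<le> opnorm_on S f" unfolding eq by (rule cSup_upper[OF zT bdd])
  fix x assume x: "x \<in> S"
  have xc: "x \<in> carrier_vec n" using subsp_carrier[OF S x] .
  show "vnorm (f x) \<le> opnorm_on S f * vnorm x"
  proof (cases "vnorm x = 0")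
    case True
    hence "x = 0\<^sub>v n" using vnorm_zero_iff[OF xc] by simp
    thus ?thesis using linon_zero[OF S f] by simp
  next
    case False
    hence pos: "vnorm x > 0" using vnorm_ge0[of x] by simp
    define x' where "x' = (1 / of_real (vnorm x)) \<cdot>\<^sub>v x"
    have x'S: "x' \<in> S" unfolding x'_def using subsp_smult[OF S x] .
    have "vnorm x' = 1" unfolding x'_def using vnorm_smult[OF xc] pos by (simp add: norm_divide)
    hence "vnorm (f x') \<in> T" unfolding T_def using x'S by auto
    hence le: "vnorm (f x') \<le> opnorm_on S f" unfolding eq by (rule cSup_upper[OF _ bdd])
    have "f x' = (1 / of_real (vnorm x)) \<cdot>\<^sub>v f x" unfolding x'_def using linonD(3)[OF f x] .
    hence "vnorm (f x') = vnorm (f x) / vnorm x"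
      using vnorm_smult[OF linonD(1)[OF f x]] pos by (simp add: norm_divide)
    thus ?thesis using le pos by (simp add: divide_le_eq)
  qed
qed

lemma rep_unique: assumes S: "subsp n S" and r: "r \<in> S" "r' \<in> S" and eq: "\<forall>u\<in>S. u \<bullet>c r = u \<bullet>c r'"
  shows "r = r'"
proof -
  have c: "r \<in> carrier_vec n" "r' \<in> carrier_vec n" using subsp_carrier[OF S] r by auto
  have d: "r - r' \<in> S" using subsp_minus[OF S r] .
  have "(r - r') \<bullet>c (r - r') = 0"
    using eq d c ip_minus_right[of "r - r'" n r r'] by simp
  thus ?thesis using ip_self_zero[of "r - r'" n] c vec_diff_zero[of r n r'] by simp
qed

lemma sub_adjoint_char: assumes S: "subsp n S" and H: "hasproj n S" and f: "linon S m f"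
  and y: "y \<in> carrier_vec m"
  shows "sub_adjoint S T f y \<in> S" "\<forall>u\<in>S. f u \<bullet>c y = u \<bullet>c sub_adjoint S T f y"
proof -
  have "\<exists>r\<in>S. \<forall>u\<in>S. f u \<bullet>c y = u \<bullet>c r"
  proof (rule riesz[OF S H])
    fix a b assume ab: "a \<in> S" "b \<in> S"
    have "f (a + b) = f a + f b" using linonD(2)[OF f ab] .
    thus "f (a + b) \<bullet>c y = f a \<bullet>c y + f b \<bullet>c y"
      using ip_add_left[OF linonD(1)[OF f ab(1)] linonD(1)[OF f ab(2)] y] by simp
  next
    fix c a assume a: "a \<in> S"
    have "f (c \<cdot>\<^sub>v a) = c \<cdot>\<^sub>v f a" using linonD(3)[OF f a] .
    thus "f (c \<cdot>\<^sub>v a) \<bullet>c y = c * (f a \<bullet>c y)"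
      using ip_smult_left[OF linonD(1)[OF f a] y] by simp
  qed
  then obtain r where r: "r \<in> S" "\<forall>u\<in>S. f u \<bullet>c y = u \<bullet>c r" by blast
  have "sub_adjoint S T f y = r" unfolding sub_adjoint_def
  proof (rule the_equality)
    show "r \<in> S \<and> (\<forall>u\<in>S. f u \<bullet>c y = u \<bullet>c r)" using r by blast
    fix r' assume "r' \<in> S \<and> (\<forall>u\<in>S. f u \<bullet>c y = u \<bullet>c r')"
    hence "r' \<in> S" "\<forall>u\<in>S. u \<bullet>c r' = u \<bullet>c r" using r by auto
    thus "r' = r" using rep_unique[OF S, of r' r] r(1) by blast
  qed
  thus "sub_adjoint S T f y \<in> S" "\<forall>u\<in>S. f u \<bullet>c y = u \<bullet>c sub_adjoint S T f y" using r by auto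
qed

lemma sub_adjoint_linon: assumes S: "subsp n S" and H: "hasproj n S" and f: "linon S m f"
  and T: "subsp m T"
  shows "linon T n (sub_adjoint S T f)"
proof -
  note ch = sub_adjoint_char[OF S H f, of _ T]
  have Tc: "\<And>y. y \<in> T \<Longrightarrow> y \<in> carrier_vec m" using subsp_carrier[OF T] .
  have Sc: "\<And>y. y \<in> S \<Longrightarrow> y \<in> carrier_vec n" using subsp_carrier[OF S] .
  show ?thesis unfolding linon_def
  proof (intro conjI ballI allI)
    fix y assume "y \<in> T" thus "sub_adjoint S T f y \<in> carrier_vec n" using ch(1) Tc Sc by blast
  next
    fix y z assume y: "y \<in> T" and z: "z \<in> T"
    have yc: "y \<in> carrier_vec m" and zc: "z \<in> carrier_vec m" using Tc y z by auto
    have yzc: "y + z \<in> carrier_vec m" using yc zc by simp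
    show "sub_adjoint S T f (y + z) = sub_adjoint S T f y + sub_adjoint S T f z"
    proof (rule rep_unique[OF S])
      show "sub_adjoint S T f (y + z) \<in> S" using ch(1)[OF yzc] .
      show "sub_adjoint S T f y + sub_adjoint S T f z \<in> S"
        using subsp_add[OF S ch(1)[OF yc] ch(1)[OF zc]] .
      show "\<forall>u\<in>S. u \<bullet>c sub_adjoint S T f (y + z) = u \<bullet>c (sub_adjoint S T f y + sub_adjoint S T f z)"
      proof
        fix u assume u: "u \<in> S"
        have fu: "f u \<in> carrier_vec m" using linonD(1)[OF f u] .
        have uc: "u \<in> carrier_vec n" using Sc[OF u] .
        have a1: "f u \<bullet>c (y + z) = u \<bullet>c sub_adjoint S T f (y + z)" using ch(2)[OF yzc] u by blast
        have a2: "f u \<bullet>c y = u \<bullet>c sub_adjoint S T f y" using ch(2)[OF yc] u by blast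
        have a3: "f u \<bullet>c z = u \<bullet>c sub_adjoint S T f z" using ch(2)[OF zc] u by blast
        have a4: "f u \<bullet>c (y + z) = f u \<bullet>c y + f u \<bullet>c z" using ip_add_right[OF fu yc zc] .
        have a5: "u \<bullet>c (sub_adjoint S T f y + sub_adjoint S T f z) = u \<bullet>c sub_adjoint S T f y + u \<bullet>c sub_adjoint S T f z"
          using ip_add_right[OF uc Sc[OF ch(1)[OF yc]] Sc[OF ch(1)[OF zc]]] .
        show "u \<bullet>c sub_adjoint S T f (y + z) = u \<bullet>c (sub_adjoint S T f y + sub_adjoint S T f z)"
          using a1 a2 a3 a4 a5 by simp
      qed
    qed
  next
    fix c y assume y: "y \<in> T"
    have yc: "y \<in> carrier_vec m" using Tc y by auto
    have cyc: "c \<cdot>\<^sub>v y \<in> carrier_vec m" using yc by simp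
    show "sub_adjoint S T f (c \<cdot>\<^sub>v y) = c \<cdot>\<^sub>v sub_adjoint S T f y"
    proof (rule rep_unique[OF S])
      show "sub_adjoint S T f (c \<cdot>\<^sub>v y) \<in> S" using ch(1)[OF cyc] .
      show "c \<cdot>\<^sub>v sub_adjoint S T f y \<in> S" using subsp_smult[OF S ch(1)[OF yc]] .
      show "\<forall>u\<in>S. u \<bullet>c sub_adjoint S T f (c \<cdot>\<^sub>v y) = u \<bullet>c (c \<cdot>\<^sub>v sub_adjoint S T f y)"
      proof
        fix u assume u: "u \<in> S"
        have fu: "f u \<in> carrier_vec m" using linonD(1)[OF f u] .
        have uc: "u \<in> carrier_vec n" using Sc[OF u] .
        have a1: "f u \<bullet>c (c \<cdot>\<^sub>v y) = u \<bullet>c sub_adjoint S T f (c \<cdot>\<^sub>v y)" using ch(2)[OF cyc] u by blast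
        have a2: "f u \<bullet>c y = u \<bullet>c sub_adjoint S T f y" using ch(2)[OF yc] u by blast
        have a4: "f u \<bullet>c (c \<cdot>\<^sub>v y) = cnj c * (f u \<bullet>c y)" using ip_smult_right[OF fu yc] .
        have a5: "u \<bullet>c (c \<cdot>\<^sub>v sub_adjoint S T f y) = cnj c * (u \<bullet>c sub_adjoint S T f y)"
          using ip_smult_right[OF uc Sc[OF ch(1)[OF yc]]] .
        show "u \<bullet>c sub_adjoint S T f (c \<cdot>\<^sub>v y) = u \<bullet>c (c \<cdot>\<^sub>v sub_adjoint S T f y)"
          using a1 a2 a4 a5 by simp
      qed
    qed
  qed
qed



definition Rs :: "nat \<Rightarrow> complex vec list \<Rightarrow> complex vec set" where
  "Rs n ws = {mat_of_cols n ws *\<^sub>v c | c. c \<in> carrier_vec (length ws)}"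

lemma mat_of_cols_Cons_mult:
  assumes v: "v \<in> carrier_vec n" and vs: "set vs \<subseteq> carrier_vec n"
  and c: "(c::complex vec) \<in> carrier_vec (Suc (length vs))"
  shows "mat_of_cols n (v # vs) *\<^sub>v c = c $ 0 \<cdot>\<^sub>v v + mat_of_cols n vs *\<^sub>v vec (length vs) (\<lambda>i. c $ Suc i)"
proof (rule eq_vecI)
  let ?k = "length vs"
  have M1: "mat_of_cols n (v # vs) \<in> carrier_mat n (Suc ?k)" using mat_of_cols_carrier(1)[of n "v#vs"] by simp
  have M2: "mat_of_cols n vs \<in> carrier_mat n ?k" using mat_of_cols_carrier(1)[of n vs] by simp
  have d: "vec ?k (\<lambda>i. c $ Suc i) \<in> carrier_vec ?k" by simp
  show "dim_vec (mat_of_cols n (v # vs) *\<^sub>v c) = dim_vec (c $ 0 \<cdot>\<^sub>v v + mat_of_cols n vs *\<^sub>v vec (length vs) (\<lambda>i. c $ Suc i))"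
    using v by simp
  fix i assume "i < dim_vec (c $ 0 \<cdot>\<^sub>v v + mat_of_cols n vs *\<^sub>v vec (length vs) (\<lambda>i. c $ Suc i))"
  hence i: "i < n" by simp
  have "(mat_of_cols n (v # vs) *\<^sub>v c) $ i = (\<Sum>j<Suc ?k. mat_of_cols n (v # vs) $$ (i,j) * c $ j)"
    using mv_index[OF M1 c i] .
  also have "\<dots> = mat_of_cols n (v # vs) $$ (i,0) * c $ 0 + (\<Sum>j<?k. mat_of_cols n (v # vs) $$ (i,Suc j) * c $ Suc j)"
    by (rule sum.lessThan_Suc_shift)
  also have "\<dots> = v $ i * c $ 0 + (\<Sum>j<?k. mat_of_cols n vs $$ (i,j) * vec ?k (\<lambda>i. c $ Suc i) $ j)"
    using i by (simp add: mat_of_cols_def)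
  also have "\<dots> = (c $ 0 \<cdot>\<^sub>v v + mat_of_cols n vs *\<^sub>v vec (length vs) (\<lambda>i. c $ Suc i)) $ i"
    using mv_index[OF M2 d i] i v by (simp add: mult.commute)
  finally show "(mat_of_cols n (v # vs) *\<^sub>v c) $ i = (c $ 0 \<cdot>\<^sub>v v + mat_of_cols n vs *\<^sub>v vec (length vs) (\<lambda>i. c $ Suc i)) $ i" .
qed

lemma Rs_Cons: assumes v: "v \<in> carrier_vec n" and vs: "set vs \<subseteq> carrier_vec n"
  shows "Rs n (v # vs) = {a \<cdot>\<^sub>v v + u | a u. u \<in> Rs n vs}"
proof
  show "Rs n (v # vs) \<subseteq> {a \<cdot>\<^sub>v v + u | a u. u \<in> Rs n vs}"
  proof
    fix x assume "x \<in> Rs n (v # vs)"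
    then obtain c where c: "c \<in> carrier_vec (Suc (length vs))" "x = mat_of_cols n (v # vs) *\<^sub>v c"
      unfolding Rs_def by auto
    have "mat_of_cols n vs *\<^sub>v vec (length vs) (\<lambda>i. c $ Suc i) \<in> Rs n vs"
      unfolding Rs_def by (intro CollectI exI[of _ "vec (length vs) (\<lambda>i. c $ Suc i)"]) auto
    thus "x \<in> {a \<cdot>\<^sub>v v + u | a u. u \<in> Rs n vs}"
      using mat_of_cols_Cons_mult[OF v vs c(1)] c(2) by blast
  qed
  show "{a \<cdot>\<^sub>v v + u | a u. u \<in> Rs n vs} \<subseteq> Rs n (v # vs)"
  proof
    fix x assume "x \<in> {a \<cdot>\<^sub>v v + u | a u. u \<in> Rs n vs}"
    then obtain a d where d: "d \<in> carrier_vec (length vs)" "x = a \<cdot>\<^sub>v v + mat_of_cols n vs *\<^sub>v d"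
      unfolding Rs_def by auto
    have c: "vCons a d \<in> carrier_vec (Suc (length vs))" using d by simp
    have e: "vec (length vs) (\<lambda>i. vCons a d $ Suc i) = d" using d by (intro eq_vecI) auto
    have "x = mat_of_cols n (v # vs) *\<^sub>v vCons a d"
      using mat_of_cols_Cons_mult[OF v vs c] e d by simp
    thus "x \<in> Rs n (v # vs)" unfolding Rs_def using c by auto
  qed
qed

lemma Rs_Nil: "Rs n [] = {0\<^sub>v n}"
proof -
  have "mat_of_cols n [] *\<^sub>v c = 0\<^sub>v n" if "c \<in> carrier_vec 0" for c
    using that by (intro eq_vecI) (auto simp: mat_of_cols_def scalar_prod_def)
  moreover have "(0\<^sub>v 0 :: complex vec) \<in> carrier_vec 0" by simp
  ultimately have "mat_of_cols n [] *\<^sub>v (0\<^sub>v 0 :: complex vec) = 0\<^sub>v n" by blast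
  thus ?thesis unfolding Rs_def using \<open>\<And>c. c \<in> carrier_vec 0 \<Longrightarrow> _\<close>
    by (auto intro!: exI[of _ "0\<^sub>v 0 :: complex vec"])
qed

lemma ext_subsp: assumes S: "subsp n S" and v: "v \<in> carrier_vec n"
  shows "subsp n {a \<cdot>\<^sub>v v + u | a u. u \<in> S}"
  unfolding subsp_def
proof (intro conjI ballI allI subsetI)
  note Sc = subsp_carrier[OF S]
  fix x assume "x \<in> {a \<cdot>\<^sub>v v + u | a u. u \<in> S}"
  thus "x \<in> carrier_vec n" using Sc v by auto
next
  have "0\<^sub>v n = 0 \<cdot>\<^sub>v v + 0\<^sub>v n" using v by auto
  thus "0\<^sub>v n \<in> {a \<cdot>\<^sub>v v + u | a u. u \<in> S}" using subsp_zero[OF S] by blast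
next
  note Sc = subsp_carrier[OF S]
  fix x y assume x: "x \<in> {a \<cdot>\<^sub>v v + u | a u. u \<in> S}" and y: "y \<in> {a \<cdot>\<^sub>v v + u | a u. u \<in> S}"
  then obtain a u b u' where au: "u \<in> S" "x = a \<cdot>\<^sub>v v + u" and bu: "u' \<in> S" "y = b \<cdot>\<^sub>v v + u'" by blast
  have "x + y = (a + b) \<cdot>\<^sub>v v + (u + u')"
    using au bu Sc[of u] Sc[of u'] v by (intro eq_vecI) (auto simp: algebra_simps)
  thus "x + y \<in> {a \<cdot>\<^sub>v v + u | a u. u \<in> S}" using subsp_add[OF S au(1) bu(1)] by blast
next
  note Sc = subsp_carrier[OF S]
  fix c x assume x: "x \<in> {a \<cdot>\<^sub>v v + u | a u. u \<in> S}"
  then obtain a u where au: "u \<in> S" "x = a \<cdot>\<^sub>v v + u" by blast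
  have "c \<cdot>\<^sub>v x = (c * a) \<cdot>\<^sub>v v + c \<cdot>\<^sub>v u"
    using au Sc[of u] v by (intro eq_vecI) (auto simp: algebra_simps)
  thus "c \<cdot>\<^sub>v x \<in> {a \<cdot>\<^sub>v v + u | a u. u \<in> S}" using subsp_smult[OF S au(1)] by blast
qed

lemma ext_hasproj: assumes S: "subsp n S" and H: "hasproj n S" and v: "v \<in> carrier_vec n"
  shows "hasproj n {a \<cdot>\<^sub>v v + u | a u. u \<in> S}"
  unfolding hasproj_def
proof
  note Sc = subsp_carrier[OF S]
  fix x :: "complex vec" assume x: "x \<in> carrier_vec n"
  define P where "P = orth_proj S"
  have Px: "P x \<in> S" "\<forall>u\<in>S. (x - P x) \<bullet>c u = 0" using proj_char[OF S H x] unfolding P_def by auto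
  have Pv: "P v \<in> S" "\<forall>u\<in>S. (v - P v) \<bullet>c u = 0" using proj_char[OF S H v] unfolding P_def by auto
  have Pxc: "P x \<in> carrier_vec n" and Pvc: "P v \<in> carrier_vec n" using Sc Px Pv by auto
  define v' where "v' = v - P v"
  have v'c: "v' \<in> carrier_vec n" unfolding v'_def using v Pvc by simp
  define c where "c = (x \<bullet>c v') / (v' \<bullet>c v')"
  have cc: "c * (v' \<bullet>c v') = x \<bullet>c v'"
  proof (cases "v' \<bullet>c v' = 0")
    case True
    hence "v' = 0\<^sub>v n" using ip_self_zero[OF v'c] by simp
    thus ?thesis using True x by simp
  next
    case False thus ?thesis unfolding c_def by simp
  qed
  define w where "w = c \<cdot>\<^sub>v v + (P x - c \<cdot>\<^sub>v P v)"
  have inS: "P x - c \<cdot>\<^sub>v P v \<in> S" using subsp_minus[OF S Px(1) subsp_smult[OF S Pv(1)]] .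
  show "\<exists>w\<in>{a \<cdot>\<^sub>v v + u | a u. u \<in> S}. \<forall>u\<in>{a \<cdot>\<^sub>v v + u | a u. u \<in> S}. (x - w) \<bullet>c u = 0"
  proof (intro bexI ballI)
    show "w \<in> {a \<cdot>\<^sub>v v + u | a u. u \<in> S}" unfolding w_def using inS by blast
    fix t assume "t \<in> {a \<cdot>\<^sub>v v + u | a u. u \<in> S}"
    then obtain a u where au: "u \<in> S" "t = a \<cdot>\<^sub>v v + u" by blast
    have uc: "u \<in> carrier_vec n" using Sc au(1) by auto
    have xw: "x - w = (x - P x) - c \<cdot>\<^sub>v v'"
      unfolding w_def v'_def using x v Pxc Pvc by (intro eq_vecI) (auto simp: algebra_simps)
    have r: "x - P x \<in> carrier_vec n" using x Pxc by simp
    have o1: "(x - P x) \<bullet>c u = 0" using Px(2) au(1) by auto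
    have o2: "v' \<bullet>c u = 0" using Pv(2) au(1) unfolding v'_def by auto
    have o3: "(x - P x) \<bullet>c P v = 0" using Px(2) Pv(1) by auto
    have o4: "v' \<bullet>c P v = 0" using Pv(2) Pv(1) unfolding v'_def by auto
    have o5: "P x \<bullet>c v' = 0"
    proof -
      have "v' \<bullet>c P x = 0" using Pv(2) Px(1) unfolding v'_def by auto
      thus ?thesis using ip_conj[OF v'c Pxc] by simp
    qed
    have vv: "v = v' + P v" unfolding v'_def using v Pvc by auto
    have e1: "(x - P x) \<bullet>c v = x \<bullet>c v'"
    proof -
      have "(x - P x) \<bullet>c v = (x - P x) \<bullet>c v' + (x - P x) \<bullet>c P v"
        using vv ip_add_right[OF r v'c Pvc] by simp
      also have "\<dots> = x \<bullet>c v' - P x \<bullet>c v'" using o3 ip_minus_left[OF x Pxc v'c] by simp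
      finally show ?thesis using o5 by simp
    qed
    have e2: "v' \<bullet>c v = v' \<bullet>c v'"
      using vv ip_add_right[OF v'c v'c Pvc] o4 by simp
    have "(x - w) \<bullet>c t = (x - P x) \<bullet>c t - c * (v' \<bullet>c t)"
    proof -
      have cv: "c \<cdot>\<^sub>v v' \<in> carrier_vec n" using v'c by simp
      have tc: "t \<in> carrier_vec n" using au uc v by simp
      show ?thesis using xw ip_minus_left[OF r cv tc] ip_smult_left[OF v'c tc, of c] by simp
    qed
    also have "(x - P x) \<bullet>c t = cnj a * ((x - P x) \<bullet>c v) + (x - P x) \<bullet>c u"
      using au ip_add_right[OF r _ uc, of "a \<cdot>\<^sub>v v"] ip_smult_right[OF r v, of a] v by simp
    also have "v' \<bullet>c t = cnj a * (v' \<bullet>c v) + v' \<bullet>c u"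
      using au ip_add_right[OF v'c _ uc, of "a \<cdot>\<^sub>v v"] ip_smult_right[OF v'c v, of a] v by simp
    finally have "(x - w) \<bullet>c t = cnj a * (x \<bullet>c v' - c * (v' \<bullet>c v'))"
      using o1 o2 e1 e2 by (simp add: algebra_simps)
    thus "(x - w) \<bullet>c t = 0" using cc by simp
  qed
qed

lemma Rs_good: "set ws \<subseteq> carrier_vec n \<Longrightarrow> subsp n (Rs n ws) \<and> hasproj n (Rs n ws)"
proof (induction ws)
  case Nil
  have "subsp n {0\<^sub>v n}" unfolding subsp_def by auto
  moreover have "hasproj n {0\<^sub>v n}" unfolding hasproj_def by auto
  ultimately show ?case by (simp add: Rs_Nil)
next
  case (Cons v vs)
  hence v: "v \<in> carrier_vec n" and vs: "set vs \<subseteq> carrier_vec n" by auto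
  show ?case unfolding Rs_Cons[OF v vs] using ext_subsp[OF _ v] ext_hasproj[OF _ _ v] Cons.IH[OF vs] by blast
qed

lemma range_good: assumes A: "A \<in> carrier_mat n k"
  shows "subsp n (mat_range A)" "hasproj n (mat_range A)"
proof -
  have "mat_range A = Rs n (cols A)"
    unfolding mat_range_def Rs_def using A mat_of_cols_cols[of A] by auto
  moreover have "set (cols A) \<subseteq> carrier_vec n" using A cols_dim[of A] by auto
  ultimately show "subsp n (mat_range A)" "hasproj n (mat_range A)" using Rs_good by auto
qed



lemma matvec_zero: "A \<in> carrier_mat m n \<Longrightarrow> A *\<^sub>v 0\<^sub>v n = (0\<^sub>v m :: complex vec)"
  by (intro eq_vecI) auto

lemma kernel_subsp: assumes A: "(A::complex mat) \<in> carrier_mat m n" shows "subsp n (mat_kernel A)"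
  unfolding subsp_def
proof (intro conjI ballI allI subsetI)
  fix x assume "x \<in> mat_kernel A" thus "x \<in> carrier_vec n" using mat_kernelD(1)[OF A] by blast
next
  show "0\<^sub>v n \<in> mat_kernel A" using A by (intro mat_kernelI[OF A]) auto
next
  fix x y assume x: "x \<in> mat_kernel A" and y: "y \<in> mat_kernel A"
  show "x + y \<in> mat_kernel A" using mat_kernelD[OF A x] mat_kernelD[OF A y] A
    by (intro mat_kernelI[OF A]) (auto simp: mult_add_distrib_mat_vec[OF A])
next
  fix c x assume x: "x \<in> mat_kernel A"
  show "c \<cdot>\<^sub>v x \<in> mat_kernel A" using mat_kernelD[OF A x] A
    by (intro mat_kernelI[OF A]) (auto simp: mult_mat_vec[OF A])
qed

lemma range_orth_kernel: assumes H: "hermitian_mat A" and A: "A \<in> carrier_mat n n"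
  and z: "z \<in> mat_range A" and y: "y \<in> mat_kernel A"
  shows "z \<bullet>c y = 0"
proof -
  obtain w where w: "w \<in> carrier_vec n" "z = A *\<^sub>v w" using z A unfolding mat_range_def by auto
  have yc: "y \<in> carrier_vec n" and Ay: "A *\<^sub>v y = 0\<^sub>v n" using mat_kernelD[OF A y] by auto
  show ?thesis using herm_ip[OF H A w(1) yc] Ay w by simp
qed

lemma kernel_orth_range: assumes H: "hermitian_mat A" and A: "A \<in> carrier_mat n n"
  and z: "z \<in> mat_range A" and y: "y \<in> mat_kernel A"
  shows "y \<bullet>c z = 0"
proof -
  have c: "z \<in> carrier_vec n" "y \<in> carrier_vec n" using subsp_carrier[OF range_good(1)[OF A] z]
      mat_kernelD(1)[OF A y] by auto
  show ?thesis using ip_conj[OF c] range_orth_kernel[OF H A z y] by simp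
qed

lemma range_in: "A \<in> carrier_mat n n \<Longrightarrow> x \<in> carrier_vec n \<Longrightarrow> A *\<^sub>v x \<in> mat_range A"
  unfolding mat_range_def by auto

lemma herm_decomp: assumes H: "hermitian_mat A" and A: "A \<in> carrier_mat n n" and x: "x \<in> carrier_vec n"
  shows "x - orth_proj (mat_range A) x \<in> mat_kernel A"
proof -
  note RS = range_good[OF A]
  define w where "w = orth_proj (mat_range A) x"
  have w: "w \<in> mat_range A" "\<forall>u\<in>mat_range A. (x - w) \<bullet>c u = 0" using proj_char[OF RS x] w_def by auto
  have wc: "w \<in> carrier_vec n" using subsp_carrier[OF RS(1) w(1)] .
  have d: "x - w \<in> carrier_vec n" using x wc by simp
  define k where "k = A *\<^sub>v (x - w)"
  have kc: "k \<in> carrier_vec n" unfolding k_def using A d by simp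
  have "k \<bullet>c k = (x - w) \<bullet>c (A *\<^sub>v k)" unfolding k_def using herm_ip[OF H A d] kc by (simp add: k_def)
  also have "\<dots> = 0" using w(2) range_in[OF A kc] by blast
  finally have "k = 0\<^sub>v n" using ip_self_zero[OF kc] by simp
  thus ?thesis unfolding w_def[symmetric] k_def using mat_kernelI[OF A d] by simp
qed

lemma kernel_hasproj: assumes H: "hermitian_mat A" and A: "A \<in> carrier_mat n n"
  shows "hasproj n (mat_kernel A)"
  unfolding hasproj_def
proof
  fix x :: "complex vec" assume x: "x \<in> carrier_vec n"
  note RS = range_good[OF A]
  define w where "w = orth_proj (mat_range A) x"
  have w: "w \<in> mat_range A" using proj_char[OF RS x] w_def by auto
  have wc: "w \<in> carrier_vec n" using subsp_carrier[OF RS(1) w] .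
  have "x - (x - w) = w" using x wc by auto
  moreover have "x - w \<in> mat_kernel A" using herm_decomp[OF H A x] w_def by simp
  ultimately show "\<exists>w\<in>mat_kernel A. \<forall>u\<in>mat_kernel A. (x - w) \<bullet>c u = 0"
    using range_orth_kernel[OF H A w] by metis
qed

lemma proj_kernel: assumes H: "hermitian_mat A" and A: "A \<in> carrier_mat n n" and x: "x \<in> carrier_vec n"
  shows "orth_proj (mat_kernel A) x = x - orth_proj (mat_range A) x"
proof (rule proj_eq[OF kernel_subsp[OF A] x])
  note RS = range_good[OF A]
  define w where "w = orth_proj (mat_range A) x"
  have w: "w \<in> mat_range A" using proj_char[OF RS x] w_def by auto
  have wc: "w \<in> carrier_vec n" using subsp_carrier[OF RS(1) w] .
  show "x - orth_proj (mat_range A) x \<in> mat_kernel A" using herm_decomp[OF H A x] .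
  have "x - (x - w) = w" using x wc by auto
  thus "\<forall>u\<in>mat_kernel A. (x - (x - orth_proj (mat_range A) x)) \<bullet>c u = 0"
    using range_orth_kernel[OF H A w] w_def by simp
qed

lemma range_kernel_zero: assumes H: "hermitian_mat A" and A: "A \<in> carrier_mat n n"
  and z: "z \<in> mat_range A" "z \<in> mat_kernel A" shows "z = 0\<^sub>v n"
  using range_orth_kernel[OF H A z] ip_self_zero[of z n] mat_kernelD(1)[OF A z(2)] by simp

lemma range_inj: assumes H: "hermitian_mat A" and A: "A \<in> carrier_mat n n"
  shows "inj_on (\<lambda>x. A *\<^sub>v x) (mat_range A)"
proof (rule inj_onI)
  fix x y assume x: "x \<in> mat_range A" and y: "y \<in> mat_range A" and e: "A *\<^sub>v x = A *\<^sub>v y"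
  note RS = range_good[OF A]
  have c: "x \<in> carrier_vec n" "y \<in> carrier_vec n" using subsp_carrier[OF RS(1)] x y by auto
  have d: "x - y \<in> mat_range A" using subsp_minus[OF RS(1) x y] .
  have "A *\<^sub>v (x - y) = 0\<^sub>v n" using e c A by (simp add: mult_minus_distrib_mat_vec[OF A])
  hence "x - y \<in> mat_kernel A" using mat_kernelI[OF A] c by simp
  hence "x - y = 0\<^sub>v n" using range_kernel_zero[OF H A d] by simp
  thus "x = y" using vec_diff_zero[OF c] by simp
qed

lemma range_surj: assumes H: "hermitian_mat A" and A: "A \<in> carrier_mat n n"
  shows "(\<lambda>x. A *\<^sub>v x) ` mat_range A = mat_range A"
proof
  show "(\<lambda>x. A *\<^sub>v x) ` mat_range A \<subseteq> mat_range A"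
    using range_in[OF A] subsp_carrier[OF range_good(1)[OF A]] by auto
  show "mat_range A \<subseteq> (\<lambda>x. A *\<^sub>v x) ` mat_range A"
  proof
    fix y assume "y \<in> mat_range A"
    then obtain z where z: "z \<in> carrier_vec n" "y = A *\<^sub>v z" using A unfolding mat_range_def by auto
    note RS = range_good[OF A]
    define w where "w = orth_proj (mat_range A) z"
    have w: "w \<in> mat_range A" using proj_char[OF RS z(1)] w_def by auto
    have wc: "w \<in> carrier_vec n" using subsp_carrier[OF RS(1) w] .
    have "A *\<^sub>v (z - w) = 0\<^sub>v n" using mat_kernelD(2)[OF A herm_decomp[OF H A z(1)]] w_def by simp
    hence "A *\<^sub>v z - A *\<^sub>v w = 0\<^sub>v n" using z A wc by (simp add: mult_minus_distrib_mat_vec[OF A])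
    hence "A *\<^sub>v z = A *\<^sub>v w" using vec_diff_zero[of "A *\<^sub>v z" n "A *\<^sub>v w"] A z wc by simp
    hence "A *\<^sub>v w = y" using z by simp
    thus "y \<in> (\<lambda>x. A *\<^sub>v x) ` mat_range A" using w by blast
  qed
qed

lemma inv_range: assumes H: "hermitian_mat A" and A: "A \<in> carrier_mat n n" and y: "y \<in> mat_range A"
  shows "the_inv_into (mat_range A) (\<lambda>x. A *\<^sub>v x) y \<in> mat_range A"
    "A *\<^sub>v the_inv_into (mat_range A) (\<lambda>x. A *\<^sub>v x) y = y"
  using the_inv_into_into[OF range_inj[OF H A], of y] f_the_inv_into_f[OF range_inj[OF H A], of y]
    range_surj[OF H A] y by auto

lemma inv_range_eq: assumes H: "hermitian_mat A" and A: "A \<in> carrier_mat n n"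
  and w: "w \<in> mat_range A" and e: "A *\<^sub>v w = y"
  shows "the_inv_into (mat_range A) (\<lambda>x. A *\<^sub>v x) y = w"
  using the_inv_into_f_eq[OF range_inj[OF H A] e w] by simp

lemma inv_range_linon: assumes H: "hermitian_mat A" and A: "A \<in> carrier_mat n n"
  shows "linon (mat_range A) n (the_inv_into (mat_range A) (\<lambda>x. A *\<^sub>v x))"
  unfolding linon_def
proof (intro conjI ballI allI)
  note RS = range_good[OF A]
  let ?I = "the_inv_into (mat_range A) (\<lambda>x. A *\<^sub>v x)"
  fix x assume x: "x \<in> mat_range A"
  show "?I x \<in> carrier_vec n" using subsp_carrier[OF RS(1) inv_range(1)[OF H A x]] .
next
  note RS = range_good[OF A]
  let ?I = "the_inv_into (mat_range A) (\<lambda>x. A *\<^sub>v x)"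
  fix x y assume x: "x \<in> mat_range A" and y: "y \<in> mat_range A"
  note ix = inv_range[OF H A x] and iy = inv_range[OF H A y]
  have c: "?I x \<in> carrier_vec n" "?I y \<in> carrier_vec n" using subsp_carrier[OF RS(1)] ix iy by auto
  show "?I (x + y) = ?I x + ?I y"
    by (rule inv_range_eq[OF H A subsp_add[OF RS(1) ix(1) iy(1)]])
      (use c ix iy in \<open>simp add: mult_add_distrib_mat_vec[OF A]\<close>)
next
  note RS = range_good[OF A]
  let ?I = "the_inv_into (mat_range A) (\<lambda>x. A *\<^sub>v x)"
  fix c x assume x: "x \<in> mat_range A"
  note ix = inv_range[OF H A x]
  have cx: "?I x \<in> carrier_vec n" using subsp_carrier[OF RS(1)] ix by auto
  show "?I (c \<cdot>\<^sub>v x) = c \<cdot>\<^sub>v ?I x"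
    by (rule inv_range_eq[OF H A subsp_smult[OF RS(1) ix(1)]])
      (use cx ix in \<open>simp add: mult_mat_vec[OF A]\<close>)
qed

lemma psd_herm: "psd_mat A \<Longrightarrow> hermitian_mat A" unfolding psd_mat_def by simp

lemma psd_Re: assumes P: "psd_mat A" and A: "A \<in> carrier_mat n n" and x: "x \<in> carrier_vec n"
  shows "0 \<le> Re ((A *\<^sub>v x) \<bullet>c x)"
  using P A x unfolding psd_mat_def by (auto simp: less_eq_complex_def)

lemma psd_lower: assumes P: "psd_mat A" and A: "A \<in> carrier_mat n n" and x1: "x1 \<in> mat_range A"
  shows "(vnorm x1)^2 \<le> opnorm_on (mat_range A) (the_inv_into (mat_range A) (\<lambda>x. A *\<^sub>v x)) * Re ((A *\<^sub>v x1) \<bullet>c x1)"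
proof -
  have H: "hermitian_mat A" using psd_herm[OF P] .
  note RS = range_good[OF A]
  let ?I = "the_inv_into (mat_range A) (\<lambda>x. A *\<^sub>v x)"
  define a where "a = opnorm_on (mat_range A) ?I"
  define w where "w = ?I x1"
  have w: "w \<in> mat_range A" "A *\<^sub>v w = x1" using inv_range[OF H A x1] w_def by auto
  have wc: "w \<in> carrier_vec n" using subsp_carrier[OF RS(1) w(1)] .
  have xc: "x1 \<in> carrier_vec n" using subsp_carrier[OF RS(1) x1] .
  note ob = opnorm_bound[OF RS inv_range_linon[OF H A]]
  have a0: "0 \<le> a" using ob(1) a_def by simp
  have wb: "vnorm w \<le> a * vnorm x1" using ob(2)[OF x1] a_def w_def by simp
  define \<alpha> where "\<alpha> = Re ((A *\<^sub>v x1) \<bullet>c x1)"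
  define \<beta> where "\<beta> = (vnorm x1)^2"
  define \<gamma> where "\<gamma> = Re (x1 \<bullet>c w)"
  have \<alpha>0: "0 \<le> \<alpha>" using psd_Re[OF P A xc] \<alpha>_def by simp
  have \<gamma>le: "\<gamma> \<le> a * \<beta>"
  proof -
    have "\<gamma> \<le> cmod (x1 \<bullet>c w)" unfolding \<gamma>_def by (rule complex_Re_le_cmod)
    also have "\<dots> \<le> vnorm x1 * vnorm w" by (rule cauchy_schwarz[OF xc wc])
    also have "\<dots> \<le> vnorm x1 * (a * vnorm x1)" by (rule mult_left_mono[OF wb vnorm_ge0])
    finally show ?thesis unfolding \<beta>_def by (simp add: power2_eq_square ac_simps)
  qed
  show ?thesis
  proof (cases "a = 0")
    case True
    hence "vnorm w = 0" using wb vnorm_ge0[of w] by simp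
    hence "w = 0\<^sub>v n" using vnorm_zero_iff[OF wc] by simp
    hence "x1 = 0\<^sub>v n" using w(2) matvec_zero[OF A] by simp
    thus ?thesis using matvec_zero[OF A] by simp
  next
    case False
    hence apos: "a > 0" using a0 by simp
    define s where "s = 1 / a"
    define z where "z = x1 - of_real s \<cdot>\<^sub>v w"
    have zc: "z \<in> carrier_vec n" unfolding z_def using xc wc by simp
    have Az: "A *\<^sub>v z = A *\<^sub>v x1 - of_real s \<cdot>\<^sub>v x1"
      unfolding z_def using A xc wc w(2) by (simp add: mult_minus_distrib_mat_vec[OF A] mult_mat_vec[OF A])
    have Ax1c: "A *\<^sub>v x1 \<in> carrier_vec n" using A xc by simp
    have sxc: "of_real s \<cdot>\<^sub>v x1 \<in> carrier_vec n" "of_real s \<cdot>\<^sub>v w \<in> carrier_vec n" using xc wc by auto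
    have e1: "(A *\<^sub>v x1) \<bullet>c w = x1 \<bullet>c x1" using herm_ip[OF H A xc wc] w(2) by simp
    have zz: "(A *\<^sub>v z) \<bullet>c z = (A *\<^sub>v x1 - of_real s \<cdot>\<^sub>v x1) \<bullet>c (x1 - of_real s \<cdot>\<^sub>v w)"
      using Az z_def by simp
    have "(A *\<^sub>v z) \<bullet>c z = (A *\<^sub>v x1) \<bullet>c x1 - of_real s * ((A *\<^sub>v x1) \<bullet>c w)
        - of_real s * (x1 \<bullet>c x1) + of_real s * of_real s * (x1 \<bullet>c w)"
      unfolding zz
      using ip_minus_left[OF Ax1c sxc(1) zc[unfolded z_def]] ip_minus_right[OF Ax1c xc sxc(2)]
        ip_minus_right[OF sxc(1) xc sxc(2)] ip_smult_left[OF xc xc] ip_smult_left[OF xc sxc(2)]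
        ip_smult_right[OF Ax1c wc] ip_smult_right[OF xc wc]
      by (simp add: algebra_simps)
    hence "Re ((A *\<^sub>v z) \<bullet>c z) = \<alpha> - 2 * s * \<beta> + s * s * \<gamma>"
      unfolding \<alpha>_def \<beta>_def \<gamma>_def using e1 by (simp add: ip_self_vnorm)
    moreover have "0 \<le> Re ((A *\<^sub>v z) \<bullet>c z)" using psd_Re[OF P A zc] .
    ultimately have q: "0 \<le> \<alpha> - 2 * s * \<beta> + s * s * \<gamma>" by simp
    have "s * s * \<gamma> \<le> s * s * (a * \<beta>)" by (rule mult_left_mono[OF \<gamma>le]) simp
    also have "\<dots> = s * \<beta>" using apos s_def by (simp add: field_simps power2_eq_square)
    finally have "0 \<le> \<alpha> - s * \<beta>" using q by simp
    hence "\<beta> / a \<le> \<alpha>" using s_def by simp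
    thus ?thesis unfolding \<alpha>_def[symmetric] \<beta>_def[symmetric] a_def[symmetric] using apos
      by (simp add: divide_le_eq ac_simps)
  qed
qed



lemma key_ineq: fixes u n :: real assumes u0: "0 \<le> u" and n0: "0 \<le> n" and h: "u * (1 + n)^2 < 1"
  shows "u * n^2 < (1 - u)^2" and "u < 1"
proof -
  define s where "s = sqrt u"
  have s0: "0 \<le> s" unfolding s_def using u0 by simp
  have us: "u = s^2" unfolding s_def using u0 by simp
  have "(s * (1 + n))^2 < 1" using h us by (simp add: power_mult_distrib)
  hence sl: "s * (1 + n) < 1" using s0 n0 by (smt (verit) one_power2 power_mono)
  have "s * n \<ge> 0" using s0 n0 by simp
  hence s1: "s < 1" using sl by (simp add: algebra_simps)
  have "n * s < 1 - s" using sl by (simp add: algebra_simps)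
  hence "1 - u - n * s > s * (1 - s)" using us by (simp add: power2_eq_square algebra_simps)
  moreover have "s * (1 - s) \<ge> 0" using s0 s1 by simp
  ultimately have gt: "1 - u > n * s" by simp
  have "n * s \<ge> 0" using n0 s0 by simp
  hence "(n * s)^2 < (1 - u)^2" using gt by (simp add: power_strict_mono)
  thus "u * n^2 < (1 - u)^2" using us by (simp add: power_mult_distrib mult.commute)
  show "u < 1" using s1 us s0 by (simp add: power_less_one_iff)
qed

lemma final_arith:
  fixes a1 a2 b1 b2 u n :: real
  assumes nn: "0 \<le> a1" "0 \<le> a2" "0 \<le> b1" "0 \<le> b2" "0 \<le> u" "0 \<le> n"
  and h: "u * (1 + n)^2 < 1"
  and e1: "a1^2 + b1^2 \<le> u * (a1^2 + b1^2 + n * (a1 * a2 + b1 * b2))"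
  and e2: "a2 \<le> u * b2 + n * a1" and e3: "b2 \<le> u * a2 + n * b1"
  shows "a1 = 0 \<and> a2 = 0 \<and> b1 = 0 \<and> b2 = 0"
proof -
  note ki = key_ineq[OF nn(5,6) h]
  define r1 where "r1 = sqrt (a1^2 + b1^2)"
  define r2 where "r2 = sqrt (a2^2 + b2^2)"
  have r10: "0 \<le> r1" and r20: "0 \<le> r2" unfolding r1_def r2_def by auto
  have r1sq: "r1^2 = a1^2 + b1^2" unfolding r1_def by simp
  have r2sq: "r2^2 = a2^2 + b2^2" unfolding r2_def by simp
  have "r2 \<le> sqrt ((u * b2 + n * a1)^2 + (u * a2 + n * b1)^2)"
    unfolding r2_def using nn e2 e3 by (intro real_sqrt_le_mono add_mono power_mono) auto
  also have "\<dots> \<le> sqrt ((u * b2)^2 + (u * a2)^2) + sqrt ((n * a1)^2 + (n * b1)^2)"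
    by (rule real_sqrt_sum_squares_triangle_ineq)
  also have "sqrt ((u * b2)^2 + (u * a2)^2) = u * r2"
    unfolding r2_def using nn by (simp add: power_mult_distrib distrib_left[symmetric] add.commute real_sqrt_mult)
  also have "sqrt ((n * a1)^2 + (n * b1)^2) = n * r1"
    unfolding r1_def using nn by (simp add: power_mult_distrib distrib_left[symmetric] real_sqrt_mult)
  finally have r2le: "r2 * (1 - u) \<le> n * r1" by (simp add: algebra_simps)
  have cs: "a1 * a2 + b1 * b2 \<le> r1 * r2"
  proof -
    have id: "(a1^2 + b1^2) * (a2^2 + b2^2) - (a1 * a2 + b1 * b2)^2 = (a1 * b2 - a2 * b1)^2"
      by (simp add: power2_eq_square algebra_simps)
    have "(a1 * a2 + b1 * b2)^2 \<le> (a1^2 + b1^2) * (a2^2 + b2^2)"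
      using id zero_le_power2[of "a1 * b2 - a2 * b1"] by linarith
    also have "\<dots> = (r1 * r2)^2" using r1sq r2sq by (simp add: power_mult_distrib)
    finally show ?thesis using r10 r20 by (meson mult_nonneg_nonneg power2_le_imp_le)
  qed
  have e1': "r1^2 \<le> u * (r1^2 + n * (r1 * r2))"
  proof -
    have "u * (n * (a1 * a2 + b1 * b2)) \<le> u * (n * (r1 * r2))"
      using cs nn by (simp add: mult_left_mono)
    thus ?thesis using e1 r1sq by (simp add: distrib_left)
  qed
  have r1z: "r1 = 0"
  proof (rule ccontr)
    assume "r1 \<noteq> 0"
    hence r1p: "r1 > 0" using r10 by simp
    have om: "1 - u > 0" using ki(2) by simp
    have "r1 * r1 \<le> r1 * (u * (r1 + n * r2))" using e1' by (simp add: power2_eq_square algebra_simps)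
    hence "r1 \<le> u * (r1 + n * r2)" using r1p by (simp add: mult_le_cancel_left_pos)
    hence "r1 * (1 - u) \<le> u * n * r2" by (simp add: algebra_simps)
    hence "r1 * (1 - u) * (1 - u) \<le> u * n * r2 * (1 - u)" using om by (rule mult_right_mono[OF _ less_imp_le])
    also have "\<dots> = u * n * (r2 * (1 - u))" by simp
    also have "\<dots> \<le> u * n * (n * r1)" using r2le nn by (simp add: mult_left_mono)
    finally have "r1 * (1 - u)^2 \<le> r1 * (u * n^2)" by (simp add: power2_eq_square ac_simps)
    hence "(1 - u)^2 \<le> u * n^2" using r1p by simp
    thus False using ki(1) by simp
  qed
  hence "a1 = 0" "b1 = 0" using r1sq nn by (auto simp: add_nonneg_eq_0_iff)
  have "r2 * (1 - u) \<le> 0" using r2le r1z by simp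
  hence "r2 = 0" using r20 ki(2) by (simp add: mult_le_0_iff)
  hence "a2 = 0" "b2 = 0" using r2sq nn by (auto simp: add_nonneg_eq_0_iff)
  thus ?thesis using \<open>a1 = 0\<close> \<open>b1 = 0\<close> by simp
qed



lemma linon_comp: assumes "linon S m f" "\<And>x. x \<in> S \<Longrightarrow> f x \<in> T" "linon T k g"
  shows "linon S k (\<lambda>x. g (f x))"
  using assms unfolding linon_def by auto

lemma compression_linon: assumes B: "B \<in> carrier_mat p q" and R: "subsp p R" "hasproj p R"
  and S: "S \<subseteq> carrier_vec q"
  shows "linon S p (compression B R)"
  unfolding linon_def compression_def
proof (intro conjI ballI allI)
  fix x assume "x \<in> S" hence x: "x \<in> carrier_vec q" using S by auto
  show "orth_proj R (B *\<^sub>v x) \<in> carrier_vec p" using proj_carrier[OF R] B x by simp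
next
  fix x y assume "x \<in> S" "y \<in> S" hence x: "x \<in> carrier_vec q" "y \<in> carrier_vec q" using S by auto
  show "orth_proj R (B *\<^sub>v (x + y)) = orth_proj R (B *\<^sub>v x) + orth_proj R (B *\<^sub>v y)"
    using proj_add[OF R, of "B *\<^sub>v x" "B *\<^sub>v y"] B x by (simp add: mult_add_distrib_mat_vec[OF B])
next
  fix c x assume "x \<in> S" hence x: "x \<in> carrier_vec q" using S by auto
  show "orth_proj R (B *\<^sub>v (c \<cdot>\<^sub>v x)) = c \<cdot>\<^sub>v orth_proj R (B *\<^sub>v x)"
    using proj_smult[OF R, of "B *\<^sub>v x"] B x by (simp add: mult_mat_vec[OF B])
qed

lemma inv_facts: assumes bij: "bij_betw f S T"
  shows "\<And>y. y \<in> T \<Longrightarrow> the_inv_into S f y \<in> S"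
    "\<And>y. y \<in> T \<Longrightarrow> f (the_inv_into S f y) = y"
    "\<And>x y. x \<in> S \<Longrightarrow> f x = y \<Longrightarrow> the_inv_into S f y = x"
  using bij unfolding bij_betw_def
  by (auto intro: the_inv_into_into f_the_inv_into_f the_inv_into_f_eq)

lemma inv_linon: assumes S: "subsp n S" and T: "subsp m T" and f: "linon S m f" and bij: "bij_betw f S T"
  shows "linon T n (the_inv_into S f)"
  unfolding linon_def
proof (intro conjI ballI allI)
  note I = inv_facts[OF bij]
  fix y assume "y \<in> T" thus "the_inv_into S f y \<in> carrier_vec n" using I(1) subsp_carrier[OF S] by blast
next
  note I = inv_facts[OF bij]
  fix y z assume y: "y \<in> T" and z: "z \<in> T"
  show "the_inv_into S f (y + z) = the_inv_into S f y + the_inv_into S f z"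
    by (rule I(3)) (use subsp_add[OF S I(1)[OF y] I(1)[OF z]] linonD(2)[OF f I(1)[OF y] I(1)[OF z]] I(2) y z in auto)
next
  note I = inv_facts[OF bij]
  fix c y assume y: "y \<in> T"
  show "the_inv_into S f (c \<cdot>\<^sub>v y) = c \<cdot>\<^sub>v the_inv_into S f y"
    by (rule I(3)) (use subsp_smult[OF S I(1)[OF y]] linonD(3)[OF f I(1)[OF y]] I(2) y in auto)
qed

lemma smult_append: "x \<in> carrier_vec p \<Longrightarrow> y \<in> carrier_vec q \<Longrightarrow>
   (c::complex) \<cdot>\<^sub>v (x @\<^sub>v y) = (c \<cdot>\<^sub>v x) @\<^sub>v (c \<cdot>\<^sub>v y)"
  by (intro eq_vecI) auto



lemma linon_minus: assumes S: "subsp n S" and f: "linon S m f" and x: "x \<in> S" and y: "y \<in> S"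
  shows "f (x - y) = f x - f y"
proof -
  have xc: "x \<in> carrier_vec n" "y \<in> carrier_vec n" using subsp_carrier[OF S] x y by auto
  have "x - y = x + (-1) \<cdot>\<^sub>v y" using xc by auto
  hence "f (x - y) = f x + (-1) \<cdot>\<^sub>v f y"
    using linonD(2)[OF f x subsp_smult[OF S y]] linonD(3)[OF f y] by simp
  also have "\<dots> = f x - f y" using linonD(1)[OF f x] linonD(1)[OF f y] by auto
  finally show ?thesis .
qed

lemma sq_le_cancel: fixes a K :: real assumes "0 \<le> a" "a^2 \<le> a * K" "0 \<le> K" shows "a \<le> K"
proof (cases "a = 0")
  case True
  thus ?thesis using assms by (simp add: power2_eq_square)
next
  case False
  hence "a > 0" using assms by simp
  thus ?thesis using assms by (simp add: power2_eq_square mult_le_cancel_left_pos)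
qed

lemma core:
  fixes A B C :: "complex mat" and p q :: nat and t :: real
  assumes A_dim: "A \<in> carrier_mat p p"
    and C_dim: "C \<in> carrier_mat q q"
    and B_dim: "B \<in> carrier_mat p q"
    and A_psd: "psd_mat A"
    and C_psd: "psd_mat C"
    and B22_nonsing: "bij_betw (compression B (mat_kernel A)) (mat_kernel C) (mat_kernel A)"
  defines "H \<equiv> four_block_mat A B (mat_adjoint B) (- C)"
  defines "RA \<equiv> mat_range A"
  defines "NA \<equiv> mat_kernel A"
  defines "RC \<equiv> mat_range C"
  defines "NC \<equiv> mat_kernel C"
  defines "A1inv \<equiv> the_inv_into RA (\<lambda>x. A *\<^sub>v x)"
  defines "C1inv \<equiv> the_inv_into RC (\<lambda>x. C *\<^sub>v x)"
  defines "B12 \<equiv> compression B RA"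
  defines "B21 \<equiv> compression B NA"
  defines "B22 \<equiv> compression B NA"
  defines "B22inv \<equiv> the_inv_into NC B22"
  defines "B21adj \<equiv> sub_adjoint RC NA B21"
  defines "B22invadj \<equiv> sub_adjoint NA NC B22inv"
  defines "n1 \<equiv> opnorm_on NA (\<lambda>y. B12 (B22inv y))"
  defines "n2 \<equiv> opnorm_on NC (\<lambda>y. B21adj (B22invadj y))"
  defines "eps \<equiv> 1 / ((1 + max n1 n2)\<^sup>2 *
                   max (max (opnorm_on RA A1inv) (opnorm_on RC C1inv)) (opnorm_on NA B22inv))"
  assumes ev: "complex_of_real t \<in> spectrum_mat H"
    and lt1: "- eps < t" and lt2: "t < eps"
  shows False
proof -
  have AH: "hermitian_mat A" using psd_herm[OF A_psd] .
  have CH: "hermitian_mat C" using psd_herm[OF C_psd] .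
  have SRA: "subsp p RA" "hasproj p RA" using range_good[OF A_dim] RA_def by auto
  have SNA: "subsp p NA" "hasproj p NA" using kernel_subsp[OF A_dim] kernel_hasproj[OF AH A_dim] NA_def by auto
  have SRC: "subsp q RC" "hasproj q RC" using range_good[OF C_dim] RC_def by auto
  have SNC: "subsp q NC" "hasproj q NC" using kernel_subsp[OF C_dim] kernel_hasproj[OF CH C_dim] NC_def by auto
  have bij: "bij_betw B22 NC NA" using B22_nonsing unfolding B22_def NA_def NC_def .
  note I22 = inv_facts[OF bij, folded B22inv_def]
  have B22lin: "linon NC p B22" unfolding B22_def
    using compression_linon[OF B_dim SNA] subsp_carrier[OF SNC(1)] by blast
  have B22inv_lin: "linon NA q B22inv" unfolding B22inv_def using inv_linon[OF SNC(1) SNA(1) B22lin bij] .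
  have B12lin: "linon NC p B12" unfolding B12_def
    using compression_linon[OF B_dim SRA] subsp_carrier[OF SNC(1)] by blast
  have G1lin: "linon NA p (\<lambda>y. B12 (B22inv y))" using linon_comp[OF B22inv_lin I22(1) B12lin] .
  have B21lin: "linon RC p B21" unfolding B21_def
    using compression_linon[OF B_dim SNA] subsp_carrier[OF SRC(1)] by blast
  have B21adj_lin: "linon NA q B21adj" unfolding B21adj_def using sub_adjoint_linon[OF SRC B21lin SNA(1)] .
  note B21adj_ch = sub_adjoint_char[OF SRC B21lin, of _ NA, folded B21adj_def]
  have B22invadj_lin: "linon NC p B22invadj" unfolding B22invadj_def using sub_adjoint_linon[OF SNA B22inv_lin SNC(1)] .
  note B22invadj_ch = sub_adjoint_char[OF SNA B22inv_lin, of _ NC, folded B22invadj_def]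
  have B22invadj_in: "\<And>y. y \<in> NC \<Longrightarrow> B22invadj y \<in> NA"
    using B22invadj_ch(1) subsp_carrier[OF SNC(1)] by blast
  have G2lin: "linon NC q (\<lambda>y. B21adj (B22invadj y))" using linon_comp[OF B22invadj_lin B22invadj_in B21adj_lin] .
  have A1lin: "linon RA p A1inv" unfolding A1inv_def RA_def using inv_range_linon[OF AH A_dim] .
  have C1lin: "linon RC q C1inv" unfolding C1inv_def RC_def using inv_range_linon[OF CH C_dim] .
  note nA = opnorm_bound[OF SRA A1lin]
  note nC = opnorm_bound[OF SRC C1lin]
  note nN = opnorm_bound[OF SNA B22inv_lin]
  note n1b = opnorm_bound[OF SNA G1lin, folded n1_def]
  note n2b = opnorm_bound[OF SNC G2lin, folded n2_def]
  define a where "a = opnorm_on RA A1inv"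
  define c where "c = opnorm_on RC C1inv"
  define N where "N = opnorm_on NA B22inv"
  define m where "m = max (max a c) N"
  define n where "n = max n1 n2"
  have m0: "0 \<le> m" unfolding m_def using nN(1) N_def by simp
  have n0: "0 \<le> n" unfolding n_def using n1b(1) by simp
  have eps_eq: "eps = 1 / ((1 + n)^2 * m)" unfolding eps_def n_def m_def a_def c_def N_def by simp
  have mpos: "m > 0"
  proof (rule ccontr)
    assume "\<not> m > 0" hence "m = 0" using m0 by simp
    hence "eps = 0" using eps_eq by simp
    thus False using lt1 lt2 by simp
  qed
  have tlt: "\<bar>t\<bar> * m * (1 + n)^2 < 1"
  proof -
    have pos: "(1 + n)^2 * m > 0" using mpos n0 by simp
    have "\<bar>t\<bar> < eps" using lt1 lt2 by simp
    hence "\<bar>t\<bar> * ((1 + n)^2 * m) < 1" using pos eps_eq by (simp add: less_divide_eq)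
    thus ?thesis by (simp add: ac_simps)
  qed
  define lam where "lam = complex_of_real t"
  have Hc: "H \<in> carrier_mat (p + q) (p + q)" unfolding H_def using A_dim C_dim by simp
  obtain v where v: "v \<in> carrier_vec (p + q)" "v \<noteq> 0\<^sub>v (p + q)" "H *\<^sub>v v = lam \<cdot>\<^sub>v v"
    using ev Hc unfolding spectrum_mat_def eigenvalue_def eigenvector_def lam_def by auto
  define x where "x = vec_first v p"
  define y where "y = vec_last v q"
  have xc: "x \<in> carrier_vec p" and yc: "y \<in> carrier_vec q" unfolding x_def y_def by auto
  have vxy: "v = x @\<^sub>v y" unfolding x_def y_def using v(1) by simp
  have BA: "mat_adjoint B \<in> carrier_mat q p" using mat_adjoint_carrier[OF B_dim] .
  have mC: "- C \<in> carrier_mat q q" using C_dim by simp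
  have "(A *\<^sub>v x + B *\<^sub>v y) @\<^sub>v (mat_adjoint B *\<^sub>v x + (- C) *\<^sub>v y) = (lam \<cdot>\<^sub>v x) @\<^sub>v (lam \<cdot>\<^sub>v y)"
    using v(3) four_block_mult_vec[OF A_dim B_dim BA mC xc yc] smult_append[OF xc yc] vxy H_def by simp
  hence eqs: "A *\<^sub>v x + B *\<^sub>v y = lam \<cdot>\<^sub>v x" "mat_adjoint B *\<^sub>v x + (- C) *\<^sub>v y = lam \<cdot>\<^sub>v y"
    using append_vec_eq[of "A *\<^sub>v x + B *\<^sub>v y" p "lam \<cdot>\<^sub>v x"] A_dim B_dim xc yc by auto
  have eq1: "A *\<^sub>v x + B *\<^sub>v y = lam \<cdot>\<^sub>v x" using eqs(1) .
  have eq2: "mat_adjoint B *\<^sub>v x = lam \<cdot>\<^sub>v y + C *\<^sub>v y"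
  proof (rule eq_vecI)
    show "dim_vec (mat_adjoint B *\<^sub>v x) = dim_vec (lam \<cdot>\<^sub>v y + C *\<^sub>v y)" using BA C_dim by simp
    fix i assume "i < dim_vec (lam \<cdot>\<^sub>v y + C *\<^sub>v y)"
    hence iq: "i < q" using C_dim by simp
    have "(mat_adjoint B *\<^sub>v x + (- C) *\<^sub>v y) $ i = (lam \<cdot>\<^sub>v y) $ i" using eqs(2) by simp
    thus "(mat_adjoint B *\<^sub>v x) $ i = (lam \<cdot>\<^sub>v y + C *\<^sub>v y) $ i" using iq BA C_dim xc yc by (simp add: diff_eq_eq)
  qed
  define x1 where "x1 = orth_proj RA x"
  define x2 where "x2 = x - x1"
  define y1 where "y1 = orth_proj RC y"
  define y2 where "y2 = y - y1"
  have x1R: "x1 \<in> RA" using proj_char[OF SRA xc] x1_def by auto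
  have y1R: "y1 \<in> RC" using proj_char[OF SRC yc] y1_def by auto
  have x2N: "x2 \<in> NA" unfolding x2_def x1_def NA_def RA_def using herm_decomp[OF AH A_dim xc] .
  have y2N: "y2 \<in> NC" unfolding y2_def y1_def NC_def RC_def using herm_decomp[OF CH C_dim yc] .
  have x1c: "x1 \<in> carrier_vec p" using subsp_carrier[OF SRA(1) x1R] .
  have x2c: "x2 \<in> carrier_vec p" using subsp_carrier[OF SNA(1) x2N] .
  have y1c: "y1 \<in> carrier_vec q" using subsp_carrier[OF SRC(1) y1R] .
  have y2c: "y2 \<in> carrier_vec q" using subsp_carrier[OF SNC(1) y2N] .
  have xs: "x = x1 + x2" unfolding x2_def using xc x1c by auto
  have ys: "y = y1 + y2" unfolding y2_def using yc y1c by auto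
  have Ax2: "A *\<^sub>v x2 = 0\<^sub>v p" using mat_kernelD(2)[OF A_dim] x2N NA_def by blast
  have Cy2: "C *\<^sub>v y2 = 0\<^sub>v q" using mat_kernelD(2)[OF C_dim] y2N NC_def by blast
  have o12: "x1 \<bullet>c x2 = 0" using range_orth_kernel[OF AH A_dim] x1R x2N RA_def NA_def by blast
  have o12y: "y1 \<bullet>c y2 = 0" using range_orth_kernel[OF CH C_dim] y1R y2N RC_def NC_def by blast
  have Ax: "A *\<^sub>v x = A *\<^sub>v x1" using xs Ax2 x1c x2c A_dim by (simp add: mult_add_distrib_mat_vec[OF A_dim])
  have Cy: "C *\<^sub>v y = C *\<^sub>v y1" using ys Cy2 y1c y2c C_dim by (simp add: mult_add_distrib_mat_vec[OF C_dim])
  have Ax1c: "A *\<^sub>v x1 \<in> carrier_vec p" using A_dim x1c by simp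
  have Cy1c: "C *\<^sub>v y1 \<in> carrier_vec q" using C_dim y1c by simp
  have Byc: "B *\<^sub>v y \<in> carrier_vec p" using B_dim yc by simp
  have AE: "(A *\<^sub>v x) \<bullet>c x = (A *\<^sub>v x1) \<bullet>c x1"
  proof -
    have "(A *\<^sub>v x1) \<bullet>c x2 = 0"
      using range_orth_kernel[OF AH A_dim range_in[OF A_dim x1c]] x2N NA_def by blast
    thus ?thesis using Ax xs ip_add_right[OF Ax1c x1c x2c] by simp
  qed
  have CE: "(C *\<^sub>v y) \<bullet>c y = (C *\<^sub>v y1) \<bullet>c y1"
  proof -
    have "(C *\<^sub>v y1) \<bullet>c y2 = 0"
      using range_orth_kernel[OF CH C_dim range_in[OF C_dim y1c]] y2N NC_def by blast
    thus ?thesis using Cy ys ip_add_right[OF Cy1c y1c y2c] by simp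
  qed
  have px: "(vnorm x)^2 = (vnorm x1)^2 + (vnorm x2)^2" using pythag[OF x1c x2c o12] xs by simp
  have py: "(vnorm y)^2 = (vnorm y1)^2 + (vnorm y2)^2" using pythag[OF y1c y2c o12y] ys by simp
  have E1: "Re ((A *\<^sub>v x) \<bullet>c x) + Re ((B *\<^sub>v y) \<bullet>c x) = t * (vnorm x)^2"
  proof -
    have "(A *\<^sub>v x + B *\<^sub>v y) \<bullet>c x = (lam \<cdot>\<^sub>v x) \<bullet>c x" using eq1 by simp
    hence "(A *\<^sub>v x) \<bullet>c x + (B *\<^sub>v y) \<bullet>c x = lam * (x \<bullet>c x)"
      using ip_add_left[of "A *\<^sub>v x" p "B *\<^sub>v y" x] ip_smult_left[OF xc xc] A_dim Byc xc by simp
    hence "Re ((A *\<^sub>v x) \<bullet>c x + (B *\<^sub>v y) \<bullet>c x) = Re (lam * (x \<bullet>c x))" by simp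
    thus ?thesis unfolding lam_def ip_self_vnorm by simp
  qed
  have E2: "Re ((B *\<^sub>v y) \<bullet>c x) - Re ((C *\<^sub>v y) \<bullet>c y) = t * (vnorm y)^2"
  proof -
    have "(mat_adjoint B *\<^sub>v x) \<bullet>c y = (lam \<cdot>\<^sub>v y + C *\<^sub>v y) \<bullet>c y" using eq2 by simp
    hence "x \<bullet>c (B *\<^sub>v y) = lam * (y \<bullet>c y) + (C *\<^sub>v y) \<bullet>c y"
      using adjoint_ip2[OF B_dim yc xc] ip_add_left[of "lam \<cdot>\<^sub>v y" q "C *\<^sub>v y" y] ip_smult_left[OF yc yc] C_dim yc
      by simp
    moreover have "Re (x \<bullet>c (B *\<^sub>v y)) = Re ((B *\<^sub>v y) \<bullet>c x)"
      using ip_conj[OF Byc xc] by (metis cnj.simps(1))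
    ultimately show ?thesis unfolding lam_def ip_self_vnorm by simp
  qed
  define z where "z = B22inv x2"
  have zN: "z \<in> NC" unfolding z_def using I22(1)[OF x2N] .
  have zc: "z \<in> carrier_vec q" using subsp_carrier[OF SNC(1) zN] .
  have Bzc: "B *\<^sub>v z \<in> carrier_vec p" using B_dim zc by simp
  have B22z: "orth_proj NA (B *\<^sub>v z) = x2" using I22(2)[OF x2N] unfolding z_def B22_def compression_def .
  have Cz: "C *\<^sub>v z = 0\<^sub>v q" using mat_kernelD(2)[OF C_dim] zN NC_def by blast
  have X: "x2 \<bullet>c x2 + x1 \<bullet>c B12 (B22inv x2) = lam * (y2 \<bullet>c B22inv x2)"
  proof -
    have "(mat_adjoint B *\<^sub>v x) \<bullet>c z = (lam \<cdot>\<^sub>v y + C *\<^sub>v y) \<bullet>c z" using eq2 by simp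
    also have "\<dots> = lam * (y \<bullet>c z) + (C *\<^sub>v y) \<bullet>c z"
      using ip_add_left[of "lam \<cdot>\<^sub>v y" q "C *\<^sub>v y" z] ip_smult_left[OF yc zc] C_dim yc zc by simp
    also have "(C *\<^sub>v y) \<bullet>c z = 0" using herm_ip[OF CH C_dim yc zc] Cz yc by simp
    also have "y \<bullet>c z = y2 \<bullet>c z"
    proof -
      have "y1 \<bullet>c z = 0" using range_orth_kernel[OF CH C_dim] y1R zN RC_def NC_def by blast
      thus ?thesis using ys ip_add_left[OF y1c y2c zc] by simp
    qed
    finally have l: "(mat_adjoint B *\<^sub>v x) \<bullet>c z = lam * (y2 \<bullet>c z)" by simp
    have "(mat_adjoint B *\<^sub>v x) \<bullet>c z = x \<bullet>c (B *\<^sub>v z)" using adjoint_ip2[OF B_dim zc xc] .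
    also have "\<dots> = x1 \<bullet>c (B *\<^sub>v z) + x2 \<bullet>c (B *\<^sub>v z)" using xs ip_add_left[OF x1c x2c Bzc] by simp
    also have "x1 \<bullet>c (B *\<^sub>v z) = x1 \<bullet>c B12 z"
      unfolding B12_def compression_def using proj_ip_right[OF SRA Bzc x1R] .
    also have "x2 \<bullet>c (B *\<^sub>v z) = x2 \<bullet>c x2"
      using proj_ip_right[OF SNA Bzc x2N] B22z by simp
    finally have "x1 \<bullet>c B12 z + x2 \<bullet>c x2 = lam * (y2 \<bullet>c z)" using l by simp
    thus ?thesis unfolding z_def by (metis add.commute)
  qed
  have B21y1: "B21 y1 \<in> NA" using proj_char[OF SNA] B_dim y1c unfolding B21_def compression_def by simp
  have B21y1c: "B21 y1 \<in> carrier_vec p" using subsp_carrier[OF SNA(1) B21y1] .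
  have B22y2c: "B22 y2 \<in> carrier_vec p" using linonD(1)[OF B22lin y2N] .
  have projNA: "B21 y1 + B22 y2 = lam \<cdot>\<^sub>v x2"
  proof -
    have Axc: "A *\<^sub>v x \<in> carrier_vec p" using A_dim xc by simp
    have "orth_proj NA (A *\<^sub>v x + B *\<^sub>v y) = orth_proj NA (lam \<cdot>\<^sub>v x)" using eq1 by simp
    also have "orth_proj NA (lam \<cdot>\<^sub>v x) = lam \<cdot>\<^sub>v x2"
      using proj_smult[OF SNA xc] proj_kernel[OF AH A_dim xc] x2_def x1_def NA_def RA_def by simp
    also have "orth_proj NA (A *\<^sub>v x + B *\<^sub>v y) = orth_proj NA (A *\<^sub>v x) + orth_proj NA (B *\<^sub>v y)"
      using proj_add[OF SNA Axc Byc] .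
    also have "orth_proj NA (A *\<^sub>v x) = 0\<^sub>v p"
    proof -
      have "orth_proj NA (A *\<^sub>v x) = A *\<^sub>v x - orth_proj RA (A *\<^sub>v x)"
        using proj_kernel[OF AH A_dim Axc] NA_def RA_def by simp
      also have "orth_proj RA (A *\<^sub>v x) = A *\<^sub>v x" using proj_id[OF SRA(1)] range_in[OF A_dim xc] RA_def by simp
      finally show ?thesis using Axc by simp
    qed
    also have "orth_proj NA (B *\<^sub>v y) = B21 y1 + B22 y2"
      using ys proj_add[OF SNA, of "B *\<^sub>v y1" "B *\<^sub>v y2"] B_dim y1c y2c
      unfolding B21_def B22_def compression_def by (simp add: mult_add_distrib_mat_vec[OF B_dim])
    finally show ?thesis using B21y1c B22y2c by simp
  qed
  define w where "w = lam \<cdot>\<^sub>v x2 - B21 y1"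
  have wN: "w \<in> NA" unfolding w_def using subsp_minus[OF SNA(1) subsp_smult[OF SNA(1) x2N] B21y1] .
  have "B21 y1 + B22 y2 - B21 y1 = B22 y2" using B21y1c B22y2c by (intro eq_vecI) auto
  hence "B22 y2 = w" unfolding w_def using projNA by simp
  hence y2w: "y2 = B22inv w" using I22(3)[OF y2N] by simp
  have y2exp: "y2 = lam \<cdot>\<^sub>v B22inv x2 - B22inv (B21 y1)"
    using y2w linon_minus[OF SNA(1) B22inv_lin subsp_smult[OF SNA(1) x2N] B21y1] linonD(3)[OF B22inv_lin x2N]
    unfolding w_def by simp
  have bix: "B22inv x2 \<in> carrier_vec q" using linonD(1)[OF B22inv_lin x2N] .
  have biy: "B22inv (B21 y1) \<in> carrier_vec q" using linonD(1)[OF B22inv_lin B21y1] .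
  have Y: "y2 \<bullet>c y2 + y1 \<bullet>c B21adj (B22invadj y2) = lam * (B22inv x2 \<bullet>c y2)"
  proof -
    have sc: "lam \<cdot>\<^sub>v B22inv x2 \<in> carrier_vec q" using bix by simp
    have "y2 \<bullet>c y2 = (lam \<cdot>\<^sub>v B22inv x2 - B22inv (B21 y1)) \<bullet>c y2" using y2exp by simp
    also have "\<dots> = lam * (B22inv x2 \<bullet>c y2) - B22inv (B21 y1) \<bullet>c y2"
      using ip_minus_left[OF sc biy y2c] ip_smult_left[OF bix y2c] by simp
    also have "B22inv (B21 y1) \<bullet>c y2 = B21 y1 \<bullet>c B22invadj y2"
      using B22invadj_ch(2)[OF y2c] B21y1 by blast
    also have "\<dots> = y1 \<bullet>c B21adj (B22invadj y2)"
    proof -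
      have c: "B22invadj y2 \<in> carrier_vec p" using B22invadj_ch(1)[OF y2c] subsp_carrier[OF SNA(1)] by blast
      show ?thesis using B21adj_ch(2)[OF c] y1R by blast
    qed
    finally show ?thesis by simp
  qed
  have XY: "(vnorm x2)^2 + Re (x1 \<bullet>c B12 (B22inv x2)) = (vnorm y2)^2 + Re (y1 \<bullet>c B21adj (B22invadj y2))"
  proof -
    have "Re (x2 \<bullet>c x2 + x1 \<bullet>c B12 (B22inv x2)) = Re (lam * (y2 \<bullet>c B22inv x2))" using X by simp
    moreover have "Re (y2 \<bullet>c y2 + y1 \<bullet>c B21adj (B22invadj y2)) = Re (lam * (B22inv x2 \<bullet>c y2))" using Y by simp
    moreover have "Re (lam * (y2 \<bullet>c B22inv x2)) = Re (lam * (B22inv x2 \<bullet>c y2))"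
    proof -
      have "y2 \<bullet>c B22inv x2 = cnj (B22inv x2 \<bullet>c y2)" using ip_conj[OF bix y2c] by simp
      thus ?thesis unfolding lam_def by simp
    qed
    ultimately show ?thesis by (simp add: ip_self_vnorm)
  qed
  define a1 where "a1 = vnorm x1"
  define a2 where "a2 = vnorm x2"
  define b1 where "b1 = vnorm y1"
  define b2 where "b2 = vnorm y2"
  define G1x where "G1x = B12 (B22inv x2)"
  define G2y where "G2y = B21adj (B22invadj y2)"
  have nn: "0 \<le> a1" "0 \<le> a2" "0 \<le> b1" "0 \<le> b2" unfolding a1_def a2_def b1_def b2_def by (auto simp: vnorm_ge0)
  have G1xc: "G1x \<in> carrier_vec p" unfolding G1x_def using linonD(1)[OF G1lin x2N] by simp
  have G2yc: "G2y \<in> carrier_vec q" unfolding G2y_def using linonD(1)[OF G2lin y2N] by simp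
  have g1: "vnorm G1x \<le> n1 * a2" unfolding G1x_def a2_def using n1b(2)[OF x2N] by simp
  have g2: "vnorm G2y \<le> n2 * b2" unfolding G2y_def b2_def using n2b(2)[OF y2N] by simp
  have gN: "vnorm (B22inv x2) \<le> N * a2" unfolding N_def a2_def using nN(2)[OF x2N] by simp
  have n1n: "n1 \<le> n" and n2n: "n2 \<le> n" unfolding n_def by auto
  have N0: "0 \<le> N" unfolding N_def using nN(1) .
  have n10: "0 \<le> n1" using n1b(1) . have n20: "0 \<le> n2" using n2b(1) .
  have Nm: "N \<le> m" and am: "a \<le> m" and cm: "c \<le> m" unfolding m_def by auto
  define u where "u = m * \<bar>t\<bar>"
  have u0: "0 \<le> u" unfolding u_def using m0 by simp
  have tN: "\<bar>t\<bar> * N \<le> u" unfolding u_def using Nm by (simp add: mult_right_mono mult.commute)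
  have h: "u * (1 + n)^2 < 1" using tlt unfolding u_def by (simp add: ac_simps)
  define R1 where "R1 = Re (x1 \<bullet>c G1x)"
  define R2 where "R2 = Re (y1 \<bullet>c G2y)"
  have R1b: "\<bar>R1\<bar> \<le> a1 * (n1 * a2)"
  proof -
    have "\<bar>R1\<bar> \<le> cmod (x1 \<bullet>c G1x)" unfolding R1_def by (rule abs_Re_le_cmod)
    also have "\<dots> \<le> a1 * vnorm G1x" unfolding a1_def by (rule cauchy_schwarz[OF x1c G1xc])
    also have "\<dots> \<le> a1 * (n1 * a2)" using g1 nn by (simp add: mult_left_mono)
    finally show ?thesis .
  qed
  have R2b: "\<bar>R2\<bar> \<le> b1 * (n2 * b2)"
  proof -
    have "\<bar>R2\<bar> \<le> cmod (y1 \<bullet>c G2y)" unfolding R2_def by (rule abs_Re_le_cmod)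
    also have "\<dots> \<le> b1 * vnorm G2y" unfolding b1_def by (rule cauchy_schwarz[OF y1c G2yc])
    also have "\<dots> \<le> b1 * (n2 * b2)" using g2 nn by (simp add: mult_left_mono)
    finally show ?thesis .
  qed
  define QA where "QA = Re ((A *\<^sub>v x1) \<bullet>c x1)"
  define QC where "QC = Re ((C *\<^sub>v y1) \<bullet>c y1)"
  have QA0: "0 \<le> QA" unfolding QA_def using psd_Re[OF A_psd A_dim x1c] .
  have QC0: "0 \<le> QC" unfolding QC_def using psd_Re[OF C_psd C_dim y1c] .
  have en: "QA + QC = t * (a1^2 - R1 - b1^2 + R2)"
  proof -
    have d: "(vnorm x)^2 - (vnorm y)^2 = a1^2 - R1 - b1^2 + R2"
      using px py XY unfolding a1_def a2_def b1_def b2_def R1_def R2_def G1x_def G2y_def by linarith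
    have qa: "Re ((A *\<^sub>v x) \<bullet>c x) = QA" using AE unfolding QA_def by simp
    have qc: "Re ((C *\<^sub>v y) \<bullet>c y) = QC" using CE unfolding QC_def by simp
    have "QA + QC = t * (vnorm x)^2 - t * (vnorm y)^2"
      using E1 E2 qa qc by linarith
    also have "\<dots> = t * ((vnorm x)^2 - (vnorm y)^2)" by (simp add: right_diff_distrib)
    finally show ?thesis using d by simp
  qed
  have en2: "QA + QC \<le> \<bar>t\<bar> * (a1^2 + b1^2 + n * (a1 * a2 + b1 * b2))"
  proof -
    have "\<bar>a1^2 - R1 - b1^2 + R2\<bar> \<le> a1^2 + b1^2 + a1 * (n1 * a2) + b1 * (n2 * b2)"
      using R1b R2b by (simp add: abs_le_iff) (smt (verit) zero_le_power2)
    also have "\<dots> \<le> a1^2 + b1^2 + n * (a1 * a2 + b1 * b2)"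
    proof -
      have "a1 * (n1 * a2) \<le> a1 * (n * a2)" using n1n nn by (simp add: mult_left_mono mult_right_mono)
      moreover have "b1 * (n2 * b2) \<le> b1 * (n * b2)" using n2n nn by (simp add: mult_left_mono mult_right_mono)
      ultimately show ?thesis by (simp add: algebra_simps)
    qed
    finally have bb: "\<bar>a1^2 - R1 - b1^2 + R2\<bar> \<le> a1^2 + b1^2 + n * (a1 * a2 + b1 * b2)" .
    have "QA + QC \<le> \<bar>t * (a1^2 - R1 - b1^2 + R2)\<bar>" using en by simp
    also have "\<dots> = \<bar>t\<bar> * \<bar>a1^2 - R1 - b1^2 + R2\<bar>" by (simp add: abs_mult)
    also have "\<dots> \<le> \<bar>t\<bar> * (a1^2 + b1^2 + n * (a1 * a2 + b1 * b2))" using bb by (simp add: mult_left_mono)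
    finally show ?thesis .
  qed
  have pa: "a1^2 \<le> a * QA" unfolding a1_def QA_def a_def A1inv_def RA_def using psd_lower[OF A_psd A_dim] x1R RA_def by simp
  have pc: "b1^2 \<le> c * QC" unfolding b1_def QC_def c_def C1inv_def RC_def using psd_lower[OF C_psd C_dim] y1R RC_def by simp
  have e1: "a1^2 + b1^2 \<le> u * (a1^2 + b1^2 + n * (a1 * a2 + b1 * b2))"
  proof -
    have "a * QA \<le> m * QA" using am QA0 by (simp add: mult_right_mono)
    moreover have "c * QC \<le> m * QC" using cm QC0 by (simp add: mult_right_mono)
    ultimately have "a1^2 + b1^2 \<le> m * (QA + QC)" using pa pc by (simp add: distrib_left)
    also have "\<dots> \<le> m * (\<bar>t\<bar> * (a1^2 + b1^2 + n * (a1 * a2 + b1 * b2)))" using en2 m0 by (simp add: mult_left_mono)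
    finally show ?thesis unfolding u_def by (simp add: ac_simps)
  qed
  have e2: "a2 \<le> u * b2 + n * a1"
  proof -
    have "x2 \<bullet>c x2 = lam * (y2 \<bullet>c B22inv x2) - x1 \<bullet>c G1x" using X unfolding G1x_def by (simp add: eq_diff_eq)
    hence "a2^2 = cmod (lam * (y2 \<bullet>c B22inv x2) - x1 \<bullet>c G1x)" unfolding a2_def
      by (metis ip_self_vnorm norm_of_real abs_of_nonneg zero_le_power2)
    also have "\<dots> \<le> cmod (lam * (y2 \<bullet>c B22inv x2)) + cmod (x1 \<bullet>c G1x)" by (rule norm_triangle_ineq4)
    also have "cmod (lam * (y2 \<bullet>c B22inv x2)) \<le> \<bar>t\<bar> * (b2 * (N * a2))"
    proof -
      have "cmod (y2 \<bullet>c B22inv x2) \<le> b2 * vnorm (B22inv x2)" unfolding b2_def by (rule cauchy_schwarz[OF y2c bix])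
      also have "\<dots> \<le> b2 * (N * a2)" using gN nn by (simp add: mult_left_mono)
      finally show ?thesis unfolding lam_def by (simp add: norm_mult mult_left_mono)
    qed
    also have "cmod (x1 \<bullet>c G1x) \<le> a1 * (n1 * a2)"
    proof -
      have "cmod (x1 \<bullet>c G1x) \<le> a1 * vnorm G1x" unfolding a1_def by (rule cauchy_schwarz[OF x1c G1xc])
      also have "\<dots> \<le> a1 * (n1 * a2)" using g1 nn by (simp add: mult_left_mono)
      finally show ?thesis .
    qed
    finally have "a2^2 \<le> a2 * (\<bar>t\<bar> * N * b2 + n1 * a1)" by (simp add: algebra_simps)
    moreover have "0 \<le> \<bar>t\<bar> * N * b2 + n1 * a1" using N0 n10 nn by simp
    ultimately have "a2 \<le> \<bar>t\<bar> * N * b2 + n1 * a1" using sq_le_cancel[OF nn(2)] by blast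
    also have "\<dots> \<le> u * b2 + n * a1"
      using tN n1n nn by (intro add_mono mult_right_mono) auto
    finally show ?thesis .
  qed
  have e3: "b2 \<le> u * a2 + n * b1"
  proof -
    have "y2 \<bullet>c y2 = lam * (B22inv x2 \<bullet>c y2) - y1 \<bullet>c G2y" using Y unfolding G2y_def by (simp add: eq_diff_eq)
    hence "b2^2 = cmod (lam * (B22inv x2 \<bullet>c y2) - y1 \<bullet>c G2y)" unfolding b2_def
      by (metis ip_self_vnorm norm_of_real abs_of_nonneg zero_le_power2)
    also have "\<dots> \<le> cmod (lam * (B22inv x2 \<bullet>c y2)) + cmod (y1 \<bullet>c G2y)" by (rule norm_triangle_ineq4)
    also have "cmod (lam * (B22inv x2 \<bullet>c y2)) \<le> \<bar>t\<bar> * ((N * a2) * b2)"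
    proof -
      have "cmod (B22inv x2 \<bullet>c y2) \<le> vnorm (B22inv x2) * b2" unfolding b2_def by (rule cauchy_schwarz[OF bix y2c])
      also have "\<dots> \<le> (N * a2) * b2" using gN nn by (simp add: mult_right_mono)
      finally show ?thesis unfolding lam_def by (simp add: norm_mult mult_left_mono)
    qed
    also have "cmod (y1 \<bullet>c G2y) \<le> b1 * (n2 * b2)"
    proof -
      have "cmod (y1 \<bullet>c G2y) \<le> b1 * vnorm G2y" unfolding b1_def by (rule cauchy_schwarz[OF y1c G2yc])
      also have "\<dots> \<le> b1 * (n2 * b2)" using g2 nn by (simp add: mult_left_mono)
      finally show ?thesis .
    qed
    finally have "b2^2 \<le> b2 * (\<bar>t\<bar> * N * a2 + n2 * b1)" by (simp add: algebra_simps)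
    moreover have "0 \<le> \<bar>t\<bar> * N * a2 + n2 * b1" using N0 n20 nn by simp
    ultimately have "b2 \<le> \<bar>t\<bar> * N * a2 + n2 * b1" using sq_le_cancel[OF nn(4)] by blast
    also have "\<dots> \<le> u * a2 + n * b1"
      using tN n2n nn by (intro add_mono mult_right_mono) auto
    finally show ?thesis .
  qed
  have z4: "a1 = 0 \<and> a2 = 0 \<and> b1 = 0 \<and> b2 = 0"
    using final_arith[OF nn u0 n0 h e1 e2 e3] .
  have "x1 = 0\<^sub>v p" using z4 vnorm_zero_iff[OF x1c] a1_def by simp
  moreover have "x2 = 0\<^sub>v p" using z4 vnorm_zero_iff[OF x2c] a2_def by simp
  moreover have "y1 = 0\<^sub>v q" using z4 vnorm_zero_iff[OF y1c] b1_def by simp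
  moreover have "y2 = 0\<^sub>v q" using z4 vnorm_zero_iff[OF y2c] b2_def by simp
  ultimately have "x = 0\<^sub>v p" "y = 0\<^sub>v q" using xs ys by auto
  hence "v = 0\<^sub>v (p + q)" using vxy by (intro eq_vecI) auto
  thus False using v(2) by simp
qed

theorem theorem3p4:
  fixes A B C :: "complex mat" and p q :: nat
  assumes A_dim: "A \<in> carrier_mat p p"
    and C_dim: "C \<in> carrier_mat q q"
    and B_dim: "B \<in> carrier_mat p q"
    and A_psd: "psd_mat A"
    and C_psd: "psd_mat C"
    and dim_eq: "kernel_dim A = kernel_dim C"
    and B22_nonsing: "bij_betw (compression B (mat_kernel A)) (mat_kernel C) (mat_kernel A)"
  shows
    "let H = four_block_mat A B (mat_adjoint B) (- C);
         RA = mat_range A; NA = mat_kernel A; RC = mat_range C; NC = mat_kernel C;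
         A1inv = the_inv_into RA (\<lambda>x. A *\<^sub>v x);
         C1inv = the_inv_into RC (\<lambda>x. C *\<^sub>v x);
         B12 = compression B RA;
         B21 = compression B NA;
         B22 = compression B NA;
         B22inv = the_inv_into NC B22;
         B21adj = sub_adjoint RC NA B21;
         B22invadj = sub_adjoint NA NC B22inv;
         n1 = opnorm_on NA (\<lambda>y. B12 (B22inv y));
         n2 = opnorm_on NC (\<lambda>y. B21adj (B22invadj y));
         \<epsilon> = 1 / ((1 + max n1 n2)\<^sup>2 *
                   max (max (opnorm_on RA A1inv) (opnorm_on RC C1inv)) (opnorm_on NA B22inv))
     in {t. - \<epsilon> < t \<and> t < \<epsilon>} \<inter> {t. complex_of_real t \<in> spectrum_mat H} = {}"
  unfolding Let_def
proof (rule equals0I)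
  fix t assume "t \<in> {t. - (1 / ((1 + max (opnorm_on (mat_kernel A) (\<lambda>y. compression B (mat_range A) (the_inv_into (mat_kernel C) (compression B (mat_kernel A)) y))) (opnorm_on (mat_kernel C) (\<lambda>y. sub_adjoint (mat_range C) (mat_kernel A) (compression B (mat_kernel A)) (sub_adjoint (mat_kernel A) (mat_kernel C) (the_inv_into (mat_kernel C) (compression B (mat_kernel A))) y))))\<^sup>2 * max (max (opnorm_on (mat_range A) (the_inv_into (mat_range A) ((*\<^sub>v) A))) (opnorm_on (mat_range C) (the_inv_into (mat_range C) ((*\<^sub>v) C)))) (opnorm_on (mat_kernel A) (the_inv_into (mat_kernel C) (compression B (mat_kernel A)))))) < t \<and> t < 1 / ((1 + max (opnorm_on (mat_kernel A) (\<lambda>y. compression B (mat_range A) (the_inv_into (mat_kernel C) (compression B (mat_kernel A)) y))) (opnorm_on (mat_kernel C) (\<lambda>y. sub_adjoint (mat_range C) (mat_kernel A) (compression B (mat_kernel A)) (sub_adjoint (mat_kernel A) (mat_kernel C) (the_inv_into (mat_kernel C) (compression B (mat_kernel A))) y))))\<^sup>2 * max (max (opnorm_on (mat_range A) (the_inv_into (mat_range A) ((*\<^sub>v) A))) (opnorm_on (mat_range C) (the_inv_into (mat_range C) ((*\<^sub>v) C)))) (opnorm_on (mat_kernel A) (the_inv_into (mat_kernel C) (compression B (mat_kernel A)))))} \<inter> {t. complex_of_real t \<in> spectrum_mat (four_block_mat A B (mat_adjoint B) (- C))}"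
  thus False using core[OF A_dim C_dim B_dim A_psd C_psd B22_nonsing, of t] by auto
qed

end
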